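(* For every formula $q\in F(V)$: $\vDash_{\mathbb{SQW^*}}q$ if and only if $\vdash_{\mathrm{sq}\L^*}q$.
   Context: Let $V$ be a set of propositional variables and $F(V)$ the set of formulas built from $V$ and the constant $1$ using $\to$ and $\neg$. Abbreviations: $p^+:=(p\to 1)\to 1$, $p^-:=(p\to\neg 1)\to\neg 1$ (binding more tightly than $\neg$), $p\vee q:=((p^+\to q^+)^+\to(\neg p)^-)\to((q^-\to p^-)^-\to p^-)$; an axiom "$p\leftrightarrow q$" stands for the two axioms $p\to q$ and $q\to p$. The logic $\mathrm{sq}\L^*$ has axiom schemas (for all $p,q,r\in F(V)$): (Q1) $(p\to q)\leftrightarrow(\neg q\to\neg p)$; (Q2) $1\leftrightarrow((1\to p)\to 1)$; (Q3) $p\leftrightarrow((q\to q)\to p)$; (Q4) $(p\to q)\leftrightarrow((q^+\to p^-)\to(p^+\to q^-))$; (Q5) $\neg(p\to q)\leftrightarrow(q\to p)$; (Q6) $(p\to(\neg p\to q))^+\leftrightarrow(p^+\to(\neg p^+\to q^+))$; (Q7) $(p\to(q\vee r))\leftrightarrow((p\to r)\vee(p\to q))$; (Q8) $(p\vee(q\vee r))\leftrightarrow((p\vee q)\vee r)$; (Q9) $((p\to 1)\to((q\to 1)\to r))\to((q\to 1)\to((p\to 1)\to r))$; (Q10) $p\to 1$; and rules: (qMP) from $(r\to r)\to p$ and $(r\to r)\to(p\to q)$ infer $(r\to r)\to q$; (Reg) from $p$ infer $(r\to r)\to p$; (AReg1) from $(r\to r)\to(p\to q)$ infer $p\to q$;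 (AReg2) from $(r\to r)\to\neg(p\to q)$ infer $\neg(p\to q)$; (AReg3) from $(r\to r)\to\neg 1$ infer $\neg 1$; (AReg4) from $(r\to r)\to 1$ infer $1$; (Inv1) from $p$ infer $\neg\neg p$; (Inv2) from $\neg\neg p$ infer $p$; (Flat) from $p$ and $\neg 1$ infer $\neg p$; (R2$'$) from $p\to q$ and $r\to t$ infer $(q\to r)\to(p\to t)$; (R3$'$) from $(r\to r)\to p$ infer $p^-$. $\vdash_{\mathrm{sq}\L^*}q$ means there is a finite sequence ending with $q$ whose members are axiom instances or follow from earlier members by rules. Semantics: a quasi-Wajsberg* algebra is an algebra $\langle W;\to,\neg,{}^+,{}^-,1\rangle$ of type $\langle 2,1,1,1,0\rangle$ such that for all $x,y,z$: $x\to y=\neg y\to\neg x$; $(x\to 1)\to((y\to 1)\to z)=(y\to 1)\to((x\to 1)\to z)$; $(1\to x)\to 1=1$; $(z\to z)\to(x\to y)=x\to y$; $(1\to 1)\to x^{+}=((1\to 1)\to x)^{+}=(x\to 1)\to 1$ and $(1\to 1)\to x^{-}=((1\to 1)\to x)^{-}=(x\to\neg 1)\to\neg 1$; $x\to y=(y^{+}\to x^{-})\to(x^{+}\to y^{-})$; $\neg(x\to y)=y\to x$; $\neg\neg x=x$; $(x\to(\neg x\to y))^{+}=x^{+}\to(\neg x^{+}\to y^{+})$; $x\vee y=y\vee x$; $x\vee(y\vee z)=(x\vee y)\vee z$; $x\to(y\vee z)=(x\to y)\vee(x\to z)$, with $x\vee y:=((x^{+}\to y^{+})^{+}\to(\neg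 x)^{-})\to((y^{-}\to x^{-})^{-}\to x^{-})$. A strong quasi-Wajsberg* algebra additionally satisfies $x^+=(1\to 1)\to x^+$ and $x^-=(1\to 1)\to x^-$; $\mathbb{SQW^*}$ is the class of these. An element $d$ of such an algebra $\mathbf{A}$ is designated if $d=(c\to 1)\to 1$ for some $c\in A$. $\vDash_{\mathbb{SQW^*}}q$ means: for every $\mathbf{A}\in\mathbb{SQW^*}$ and every assignment of the variables in $A$, the value of $q$ (computing $\to,\neg,1$ in $\mathbf{A}$) is designated. *)

theory Defs
  imports Main
begin

datatype 'v form = Var 'v | One | Imp "'v form" "'v form" | Neg "'v form"

definition fplus :: "'v form \<Rightarrow> 'v form" where
  "fplus p = Imp (Imp p One) One"

definition fminus :: "'v form \<Rightarrow> 'v form" where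
  "fminus p = Imp (Imp p (Neg One)) (Neg One)"

definition fdisj :: "'v form \<Rightarrow> 'v form \<Rightarrow> 'v form" where
  "fdisj p q = Imp (Imp (fplus (Imp (fplus p) (fplus q))) (fminus (Neg p)))
                   (Imp (fminus (Imp (fminus q) (fminus p))) (fminus p))"

inductive axiom :: "'v form \<Rightarrow> bool" where
  Q1a: "axiom (Imp (Imp p q) (Imp (Neg q) (Neg p)))"
| Q1b: "axiom (Imp (Imp (Neg q) (Neg p)) (Imp p q))"
| Q2a: "axiom (Imp One (Imp (Imp One p) One))"
| Q2b: "axiom (Imp (Imp (Imp One p) One) One)"
| Q3a: "axiom (Imp p (Imp (Imp q q) p))"
| Q3b: "axiom (Imp (Imp (Imp q q) p) p)"
| Q4a: "axiom (Imp (Imp p q) (Imp (Imp (fplus q) (fminus p)) (Imp (fplus p) (fminus q))))"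
| Q4b: "axiom (Imp (Imp (Imp (fplus q) (fminus p)) (Imp (fplus p) (fminus q))) (Imp p q))"
| Q5a: "axiom (Imp (Neg (Imp p q)) (Imp q p))"
| Q5b: "axiom (Imp (Imp q p) (Neg (Imp p q)))"
| Q6a: "axiom (Imp (fplus (Imp p (Imp (Neg p) q)))
                   (Imp (fplus p) (Imp (Neg (fplus p)) (fplus q))))"
| Q6b: "axiom (Imp (Imp (fplus p) (Imp (Neg (fplus p)) (fplus q)))
                   (fplus (Imp p (Imp (Neg p) q))))"
| Q7a: "axiom (Imp (Imp p (fdisj q r)) (fdisj (Imp p r) (Imp p q)))"
| Q7b: "axiom (Imp (fdisj (Imp p r) (Imp p q)) (Imp p (fdisj q r)))"
| Q8a: "axiom (Imp (fdisj p (fdisj q r)) (fdisj (fdisj p q) r))"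
| Q8b: "axiom (Imp (fdisj (fdisj p q) r) (fdisj p (fdisj q r)))"
| Q9:  "axiom (Imp (Imp (Imp p One) (Imp (Imp q One) r))
                   (Imp (Imp q One) (Imp (Imp p One) r)))"
| Q10: "axiom (Imp p One)"

inductive provable :: "'v form \<Rightarrow> bool" where
  ax:    "axiom p \<Longrightarrow> provable p"
| qMP:   "provable (Imp (Imp r r) p) \<Longrightarrow> provable (Imp (Imp r r) (Imp p q))
            \<Longrightarrow> provable (Imp (Imp r r) q)"
| Reg:   "provable p \<Longrightarrow> provable (Imp (Imp r r) p)"
| AReg1: "provable (Imp (Imp r r) (Imp p q)) \<Longrightarrow> provable (Imp p q)"
| AReg2: "provable (Imp (Imp r r) (Neg (Imp p q))) \<Longrightarrow> provable (Neg (Imp p q))"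
| AReg3: "provable (Imp (Imp r r) (Neg One)) \<Longrightarrow> provable (Neg One)"
| AReg4: "provable (Imp (Imp r r) One) \<Longrightarrow> provable One"
| Inv1:  "provable p \<Longrightarrow> provable (Neg (Neg p))"
| Inv2:  "provable (Neg (Neg p)) \<Longrightarrow> provable p"
| Flat:  "provable p \<Longrightarrow> provable (Neg One) \<Longrightarrow> provable (Neg p)"
| R2':   "provable (Imp p q) \<Longrightarrow> provable (Imp r t) \<Longrightarrow> provable (Imp (Imp q r) (Imp p t))"
| R3':   "provable (Imp (Imp r r) p) \<Longrightarrow> provable (fminus p)"

record 'a qw_alg =
  carrier :: "'a set"
  imp :: "'a \<Rightarrow> 'a \<Rightarrow> 'a"
  neg :: "'a \<Rightarrow> 'a"
  pl  :: "'a \<Rightarrow> 'a"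
  mi  :: "'a \<Rightarrow> 'a"
  one :: "'a"

definition alg_join :: "('a, 'b) qw_alg_scheme \<Rightarrow> 'a \<Rightarrow> 'a \<Rightarrow> 'a" where
  "alg_join W x y =
     imp W (imp W (pl W (imp W (pl W x) (pl W y))) (mi W (neg W x)))
           (imp W (mi W (imp W (mi W y) (mi W x))) (mi W x))"

definition qw_star :: "('a, 'b) qw_alg_scheme \<Rightarrow> bool" where
  "qw_star W \<longleftrightarrow>
     one W \<in> carrier W \<and>
     (\<forall>x\<in>carrier W. \<forall>y\<in>carrier W. imp W x y \<in> carrier W) \<and>
     (\<forall>x\<in>carrier W. neg W x \<in> carrier W \<and> pl W x \<in> carrier W \<and> mi W x \<in> carrier W) \<and>
     (\<forall>x\<in>carrier W. \<forall>y\<in>carrier W. \<forall>z\<in>carrier W.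
        imp W x y = imp W (neg W y) (neg W x) \<and>
        imp W (imp W x (one W)) (imp W (imp W y (one W)) z)
          = imp W (imp W y (one W)) (imp W (imp W x (one W)) z) \<and>
        imp W (imp W (one W) x) (one W) = one W \<and>
        imp W (imp W z z) (imp W x y) = imp W x y \<and>
        imp W (imp W (one W) (one W)) (pl W x) = pl W (imp W (imp W (one W) (one W)) x) \<and>
        pl W (imp W (imp W (one W) (one W)) x) = imp W (imp W x (one W)) (one W) \<and>
        imp W (imp W (one W) (one W)) (mi W x) = mi W (imp W (imp W (one W) (one W)) x) \<and>
        mi W (imp W (imp W (one W) (one W)) x)
          = imp W (imp W x (neg W (one W))) (neg W (one W)) \<and>
        imp W x y = imp W (imp W (pl W y) (mi W x)) (imp W (pl W x) (mi W y)) \<and>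
        neg W (imp W x y) = imp W y x \<and>
        neg W (neg W x) = x \<and>
        pl W (imp W x (imp W (neg W x) y))
          = imp W (pl W x) (imp W (neg W (pl W x)) (pl W y)) \<and>
        alg_join W x y = alg_join W y x \<and>
        alg_join W x (alg_join W y z) = alg_join W (alg_join W x y) z \<and>
        imp W x (alg_join W y z) = alg_join W (imp W x y) (imp W x z))"

definition sqw_star :: "('a, 'b) qw_alg_scheme \<Rightarrow> bool" where
  "sqw_star W \<longleftrightarrow> qw_star W \<and>
     (\<forall>x\<in>carrier W. pl W x = imp W (imp W (one W) (one W)) (pl W x) \<and>
                     mi W x = imp W (imp W (one W) (one W)) (mi W x))"

definition designated :: "('a, 'b) qw_alg_scheme \<Rightarrow> 'a \<Rightarrow> bool" where
  "designated W d \<longleftrightarrow> (\<exists>c\<in>carrier W. d = imp W (imp W c (one W)) (one W))"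

primrec eval :: "('a, 'b) qw_alg_scheme \<Rightarrow> ('v \<Rightarrow> 'a) \<Rightarrow> 'v form \<Rightarrow> 'a" where
  "eval W v (Var x) = v x"
| "eval W v One = one W"
| "eval W v (Imp p q) = imp W (eval W v p) (eval W v q)"
| "eval W v (Neg p) = neg W (eval W v p)"

definition valid_in :: "'a itself \<Rightarrow> 'v form \<Rightarrow> bool" where
  "valid_in (T :: 'a itself) q \<longleftrightarrow>
     (\<forall>(W :: 'a qw_alg) (v :: 'v \<Rightarrow> 'a).
        sqw_star W \<longrightarrow> range v \<subseteq> carrier W \<longrightarrow> designated W (eval W v q))"

end

theory Submission
  imports Defs
begin

locale tw =
  fixes i :: "'a \<Rightarrow> 'a \<Rightarrow> 'a" and n :: "'a \<Rightarrow> 'a" and t :: 'a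
    and p :: "'a \<Rightarrow> 'a" and m :: "'a \<Rightarrow> 'a" and e :: 'a and j :: "'a \<Rightarrow> 'a \<Rightarrow> 'a"
  assumes d_p: "p x = i (i x t) t"
    and d_m: "m x = i (i x (n t)) (n t)"
    and d_e: "e = i t t"
    and a1: "i x y = i (n y) (n x)"
    and a2: "i (i x t) (i (i y t) z) = i (i y t) (i (i x t) z)"
    and a3: "i (i t x) t = t"
    and a4: "i (i z z) (i x y) = i x y"
    and a5a: "i e (p x) = p x"
    and a5b: "p (i e x) = p x"
    and a6a: "i e (m x) = m x"
    and a6b: "m (i e x) = m x"
    and a7: "i x y = i (i (p y) (m x)) (i (p x) (m y))"
    and a8: "n (i x y) = i y x"
    and a9: "n (n x) = x"
    and a10: "p (i x (i (n x) y)) = i (p x) (i (n (p x)) (p y))"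
    and dj: "j x y = i (i (p (i (p x) (p y))) (m (n x))) (i (m (i (m y) (m x))) (m x))"
    and a11: "j x y = j y x"
    and a12: "j x (j y z) = j (j x y) z"
    and a13: "i x (j y z) = j (i x y) (i x z)"


lemma (in tw) atp_tr: "(\<forall>X0 X1 X2. ((((i X1 X2) = (p (i X1 X2))) \<and> ((i X0 X1) = (p (i X0 X1)))) \<longrightarrow> ((i X0 X2) = (p (i X0 X2)))))"
proof (rule ccontr)
  assume neg: "\<not> (\<forall>X0 X1 X2. ((((i X1 X2) = (p (i X1 X2))) \<and> ((i X0 X1) = (p (i X0 X1)))) \<longrightarrow> ((i X0 X2) = (p (i X0 X2)))))"
  have f21: "(\<not> (\<forall>X0 X1 X2. ((((i X1 X2) = (p (i X1 X2))) \<and> ((i X0 X1) = (p (i X0 X1)))) \<longrightarrow> ((i X0 X2) = (p (i X0 X2))))))" using neg by metis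
  have f22: "(\<exists>X0 X1 X2. (((i X0 X2) \<noteq> (p (i X0 X2))) \<and> (((i X1 X2) = (p (i X1 X2))) \<and> ((i X0 X1) = (p (i X0 X1))))))" using f21 by metis
  have f23: "(\<exists>X0 X1 X2. (((i X0 X2) \<noteq> (p (i X0 X2))) \<and> ((i X1 X2) = (p (i X1 X2))) \<and> ((i X0 X1) = (p (i X0 X1)))))" using f22 by metis
  obtain sK0 sK1 sK2 where f25: "(((i sK0 sK2) \<noteq> (p (i sK0 sK2))) \<and> ((i sK1 sK2) = (p (i sK1 sK2))) \<and> ((i sK0 sK1) = (p (i sK0 sK1))))" using f23 by metis
  have f26: "((i sK0 sK1) = (p (i sK0 sK1)))" using f25 by metis
  have f27: "((i sK1 sK2) = (p (i sK1 sK2)))" using f25 by metis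
  have f28: "((i sK0 sK2) \<noteq> (p (i sK0 sK2)))" using f25 by metis
  have f48: "(t = (i e t))" by (metis a3 d_e)
  have f53: "((i e t) = (p t))" by (metis d_p d_e)
  have f54: "(\<forall>X0. ((i t t) = (p (i t X0))))" by (metis d_p a3)
  have f55: "(\<forall>X1. ((p (i X1 t)) = (i (p X1) t)))" by (metis d_p d_p)
  have f56: "((i t t) = (p e))" by (metis d_p f48)
  have f59: "(t = (p t))" by (metis f53 f48)
  have f60: "(\<forall>X0. (e = (p (i t X0))))" by (metis f54 d_e)
  have f61: "(e = (p e))" by (metis f56 d_e)
  have f66: "(\<forall>X0. ((n (p X0)) = (i (p X0) e)))" by (metis a8 a5a)
  have f67: "(e = (n e))" by (metis a8 d_e)
  have f68: "(\<forall>X1. ((n t) = (i t (i t X1))))" by (metis a8 a3)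
  have f69: "(\<forall>X2. ((i t (i X2 t)) = (n (p X2))))" by (metis a8 d_p)
  have f70: "((n t) = (i t e))" by (metis a8 f48)
  have f73: "(\<forall>X3. ((i (m X3) e) = (n (m X3))))" by (metis a8 a6a)
  have f83: "(e = (p (n t)))" by (metis f60 f70)
  have f84: "(t = (i (n t) t))" by (metis a3 f70)
  have f89: "((n t) = (i t (n t)))" by (metis a8 f84)
  have f120: "(\<forall>X0 X1. ((i X1 (n X0)) = (i X0 (n X1))))" by (metis a1 a9)
  have f122: "(\<forall>X5. ((i X5 e) = (i e (n X5))))" by (metis a1 f67)
  have f123: "(\<forall>X0 X1. ((i (n X0) X1) = (i (n X1) X0)))" by (metis a1 a9)
  have f124: "(\<forall>X2 X3 X4. ((i (i X2 X3) X4) = (i (n X4) (i X3 X2))))" by (metis a1 a8)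
  have f125: "(\<forall>X5. ((i e X5) = (i (n X5) e)))" by (metis a1 f67)
  have f129: "(\<forall>X2 X1. ((i (i X1 X2) e) = (i e (i X2 X1))))" by (metis f122 a8)
  have f130: "(\<forall>X0. ((p (n X0)) = (p (i X0 e))))" by (metis a5b f122)
  have f131: "(\<forall>X1. ((m (n X1)) = (m (i X1 e))))" by (metis a6b f122)
  have f166: "(\<forall>X0. ((p (p X0)) = (i (p (i X0 t)) t)))" by (metis d_p f55)
  have f167: "(\<forall>X1. ((i t (p X1)) = (n (p (i X1 t)))))" by (metis a8 f55)
  have f214: "(\<forall>X1. (e = (p (n (p X1)))))" by (metis f60 f69)
  have f215: "(\<forall>X2. (t = (i (n (p X2)) t)))" by (metis a3 f69)
  have f231: "(e = (p (n (i sK0 sK1))))" by (metis f214 f26)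
  have f242: "(e = (p (i sK1 sK0)))" by (metis f231 a8)
  have f286: "(t = (i (n (i sK0 sK1)) t))" by (metis f215 f26)
  have f299: "(t = (i (i sK1 sK0) t))" by (metis f286 a8)
  have f313: "((n t) = (i t (i sK1 sK0)))" by (metis a8 f299)
  have f328: "((m t) = (i (n t) (n t)))" by (metis d_m f89)
  have f330: "(\<forall>X1. ((m (n X1)) = (i (i t X1) (n t))))" by (metis d_m a1)
  have f331: "((m e) = (i (i t e) (n t)))" by (metis d_m f122)
  have f333: "((m e) = (i (n t) (n t)))" by (metis f331 f70)
  have f334: "((m t) = (m e))" by (metis f333 f328)
  have f413: "((i t t) = (m t))" by (metis f328 a1)
  have f415: "((m (n t)) = (i (m t) (n t)))" by (metis d_m f328)
  have f417: "(e = (m t))" by (metis f413 d_e)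
  have f418: "(e = (m e))" by (metis f334 f417)
  have f421: "((m (n t)) = (i e (n t)))" by (metis f415 f417)
  have f433: "((i t e) = (m (n t)))" by (metis f421 f122)
  have f439: "((n t) = (m (n t)))" by (metis f433 f70)
  have f464: "(\<forall>X5. ((m X5) = (i t (n (i X5 (n t))))))" by (metis f120 d_m)
  have f479: "(\<forall>X4. ((n t) = (i t (i X4 (n t)))))" by (metis f68 f120)
  have f480: "(\<forall>X5. (e = (p (i X5 (n t)))))" by (metis f60 f120)
  have f481: "(\<forall>X6. (t = (i (i X6 (n t)) t)))" by (metis a3 f120)
  have f501: "(\<forall>X5. ((m X5) = (i t (i (n t) X5))))" by (metis f464 a8)
  have f520: "(\<forall>X2. (e = (p (m X2))))" by (metis f480 d_m)
  have f583: "(\<forall>X2. (t = (i (m X2) t)))" by (metis f481 d_m)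
  have f602: "(\<forall>X2. ((n t) = (i t (m X2))))" by (metis a8 f583)
  have f619: "(\<forall>X4. (t = (i (n t) (p X4))))" by (metis f123 f215)
  have f635: "(\<forall>X6 X5. ((i X6 (n X5)) = (n (i (n X6) X5))))" by (metis a8 f123)
  have f636: "(\<forall>X7. ((i t (i (n t) X7)) = (n (p (n X7)))))" by (metis f69 f123)
  have f637: "(\<forall>X8. ((p (n X8)) = (i (i (n t) X8) t)))" by (metis d_p f123)
  have f664: "(\<forall>X7. ((m X7) = (n (p (n X7)))))" by (metis f636 f501)
  have f685: "(\<forall>X2 X1. ((m (i X1 X2)) = (n (p (i X2 X1)))))" by (metis f664 a8)
  have f686: "(\<forall>X3. ((n (p X3)) = (m (n X3))))" by (metis f664 a9)
  have f689: "(\<forall>X0. ((n e) = (m (p X0))))" by (metis f664 f214)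
  have f693: "(\<forall>X3. ((n (m X3)) = (p (n X3))))" by (metis a9 f664)
  have f694: "(\<forall>X4 X5. ((i X5 (p (n X4))) = (i (m X4) (n X5))))" by (metis a1 f664)
  have f699: "(\<forall>X14 X13. ((i (n X14) (p (n X13))) = (i (m X13) X14)))" by (metis f123 f664)
  have f704: "(\<forall>X1. ((i t (p X1)) = (m (i t X1))))" by (metis f167 f685)
  have f708: "(\<forall>X2. ((i t (i X2 t)) = (m (n X2))))" by (metis f69 f686)
  have f709: "(\<forall>X0. ((m (n X0)) = (i (p X0) e)))" by (metis f66 f686)
  have f710: "(\<forall>X0 X1. ((p (i X0 (i (n X0) X1))) = (i (p X0) (i (m (n X0)) (p X1)))))" by (metis a10 f686)
  have f716: "(\<forall>X0. (e = (m (p X0))))" by (metis f689 f67)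
  have f718: "(\<forall>X3. ((i (m X3) e) = (p (n X3))))" by (metis f73 f693)
  have f771: "(t = (i (n t) (i sK0 sK1)))" by (metis f619 f26)
  have f772: "(t = (i (n t) (i sK1 sK2)))" by (metis f619 f27)
  have f815: "(\<forall>X1. ((n e) = (m (n (i X1 (n t))))))" by (metis f686 f480)
  have f816: "(\<forall>X2. ((n e) = (m (n (i t X2)))))" by (metis f686 f60)
  have f829: "(\<forall>X1. ((p X1) = (n (m (n X1)))))" by (metis a9 f686)
  have f832: "(\<forall>X6 X7. ((i (p X6) (n X7)) = (i X7 (m (n X6)))))" by (metis f120 f686)
  have f842: "(\<forall>X1. ((n e) = (m (i (n t) X1))))" by (metis f815 a8)
  have f843: "(\<forall>X1. (e = (m (i (n t) X1))))" by (metis f842 f67)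
  have f844: "(\<forall>X2. ((n e) = (m (i X2 t))))" by (metis f816 a8)
  have f845: "(\<forall>X2. (e = (m (i X2 t))))" by (metis f844 f67)
  have f861: "(\<forall>X0 X1. ((j X0 X1) = (i (i (p X0) (n (p (i (p X0) (p X1))))) (i (m (i (m X1) (m X0))) (m X0)))))" by (metis dj f832)
  have f862: "(\<forall>X0 X1. ((j X0 X1) = (i (i (p X0) (m (i (p X1) (p X0)))) (i (m (i (m X1) (m X0))) (m X0)))))" by (metis f861 f685)
  have f929: "(\<forall>X15. ((m (m X15)) = (n (p (p (n X15))))))" by (metis f664 f693)
  have f959: "(\<forall>X1. ((p (p X1)) = (n (m (m (n X1))))))" by (metis f829 f686)
  have f960: "(\<forall>X2 X3. ((p (i X2 X3)) = (n (m (i X3 X2)))))" by (metis f829 a8)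
  have f973: "(\<forall>X10. ((i (m (n X10)) e) = (i e (p X10))))" by (metis f122 f829)
  have f986: "(\<forall>X10. ((p X10) = (i (m (n X10)) e)))" by (metis f973 a5a)
  have f1163: "(\<forall>X6 X7. ((i X6 X7) = (i e (i X6 X7))))" by (metis a4 d_e)
  have f1175: "(\<forall>X12. (e = (i (i X12 X12) e)))" by (metis a4 d_e)
  have f1226: "(\<forall>X2 X1. ((i X2 X1) = (i (i X1 X2) e)))" by (metis f129 f1163)
  have f1240: "(\<forall>X4. ((n e) = (i e (i X4 X4))))" by (metis a8 f1175)
  have f1247: "(\<forall>X4. (e = (i e (i X4 X4))))" by (metis f1240 f67)
  have f1527: "(\<forall>X0. (e = (i X0 X0)))" by (metis f1163 f1247)
  have f2139: "(\<forall>X3. ((m (i t X3)) = (i (m (n X3)) (n t))))" by (metis d_m f330)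
  have f2142: "(\<forall>X6. ((i (n t) (i t X6)) = (i (m (n X6)) e)))" by (metis f1226 f330)
  have f2175: "(\<forall>X6. ((p (n (n X6))) = (i (n t) (i t X6))))" by (metis f2142 f718)
  have f2176: "(\<forall>X6. ((p X6) = (i (n t) (i t X6))))" by (metis f2175 a9)
  have f2181: "(\<forall>X1. ((p (i X1 t)) = (i (n t) (m (n X1)))))" by (metis f2176 f708)
  have f2184: "(\<forall>X4. ((p (i (n t) X4)) = (i (n t) (m X4))))" by (metis f2176 f501)
  have f2223: "(\<forall>X6. ((p (p (n X6))) = (i (p (i (n t) X6)) t)))" by (metis f166 f123)
  have f2520: "(\<forall>X3. ((p (i (n t) X3)) = (i (p (n X3)) t)))" by (metis d_p f637)
  have f3359: "(\<forall>X2 X0 X1. ((j X0 (j X1 X2)) = (j (j X1 X0) X2)))" by (metis a12 a11)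
  have f3362: "(\<forall>X3 X4 X5. ((j X3 (j X4 X5)) = (j X5 (j X3 X4))))" by (metis a12 a11)
  have f3523: "(\<forall>X8 X6 X7. ((j X8 (j X6 X7)) = (j X7 (j X6 X8))))" by (metis f3359 a11)
  have f4135: "(\<forall>X0 X1. ((i (p X0) (p (n X1))) = (i (m X1) (m (n X0)))))" by (metis f694 f686)
  have f4512: "(\<forall>X37. ((i (i sK1 sK0) (j t X37)) = (j t (i (i sK1 sK0) X37))))" by (metis a13 f299)
  have f4515: "(\<forall>X41. ((i (n t) (j t X41)) = (j t (i (n t) X41))))" by (metis a13 f84)
  have f4528: "(\<forall>X61. ((i (n t) (j (i sK0 sK1) X61)) = (j t (i (n t) X61))))" by (metis a13 f771)
  have f4529: "(\<forall>X62. ((i (n t) (j (i sK1 sK2) X62)) = (j t (i (n t) X62))))" by (metis a13 f772)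
  have f4563: "(\<forall>X123. ((i t (j e X123)) = (j (n t) (i t X123))))" by (metis a13 f70)
  have f4605: "(\<forall>X53. ((i t (j X53 (i sK1 sK0))) = (j (i t X53) (n t))))" by (metis a13 f313)
  have f4677: "(\<forall>X61. ((i (n t) (j (i sK0 sK1) X61)) = (i (n t) (j t X61))))" by (metis f4528 f4515)
  have f4678: "(\<forall>X62. ((i (n t) (j (i sK1 sK2) X62)) = (i (n t) (j t X62))))" by (metis f4529 f4515)
  have f4696: "(\<forall>X53. ((j (n t) (i t X53)) = (i t (j X53 (i sK1 sK0)))))" by (metis f4605 a11)
  have f4697: "(\<forall>X53. ((i t (j X53 (i sK1 sK0))) = (i t (j e X53))))" by (metis f4696 f4563)
  have f6977: "((i (i sK1 sK0) (j t (i sK1 sK0))) = (j t e))" by (metis f4512 f1527)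
  have f6979: "((j t t) = (i (i sK1 sK0) (j t t)))" by (metis f4512 f299)
  have f7000: "((i (j t t) (i sK1 sK0)) = (n (j t t)))" by (metis a8 f6979)
  have f7006: "((i (j t t) (i sK1 sK0)) = (i (j t t) e))" by (metis f1226 f6979)
  have f7010: "((n (j t t)) = (i (j t t) e))" by (metis f7006 f7000)
  have f7022: "(\<forall>X1. ((i (j t t) (j X1 e)) = (j (i (j t t) X1) (n (j t t)))))" by (metis a13 f7010)
  have f7068: "(\<forall>X0. ((i X0 t) = (i (i t (m X0)) (i (p X0) (m t)))))" by (metis a7 f59)
  have f7069: "(\<forall>X2 X1. ((i X2 (i X1 e)) = (i (i (p (n X1)) (m X2)) (i (p X2) (m (i X1 e))))))" by (metis a7 f130)
  have f7075: "(\<forall>X11 X12. ((i X12 (i e X11)) = (i (i (p X11) (m X12)) (i (p X12) (m (i e X11))))))" by (metis a7 a5b)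
  have f7105: "(\<forall>X4. ((i t X4) = (i (i (p X4) e) (i (p t) (m X4)))))" by (metis a7 f417)
  have f7106: "(\<forall>X6 X5. ((i (i X5 e) X6) = (i (i (p X6) (m (n X5))) (i (p (i X5 e)) (m X6)))))" by (metis a7 f131)
  have f7113: "(\<forall>X16 X15. ((i (i e X15) X16) = (i (i (p X16) (m X15)) (i (p (i e X15)) (m X16)))))" by (metis a7 a6b)
  have f7139: "(\<forall>X62. ((i e X62) = (i (i (p X62) e) (i (p e) (m X62)))))" by (metis a7 f418)
  have f7223: "(\<forall>X0. ((i X0 t) = (i (i t (m X0)) (i (p X0) e))))" by (metis f7068 f417)
  have f7224: "(\<forall>X0. ((i X0 t) = (i (i t (m X0)) (m (n X0)))))" by (metis f7223 f709)
  have f7225: "(\<forall>X0. ((i X0 t) = (i (n t) (m (n X0)))))" by (metis f7224 f602)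
  have f7226: "(\<forall>X1. ((i X1 t) = (p (i X1 t))))" by (metis f2181 f7225)
  have f7227: "(\<forall>X1. ((i X1 t) = (i (p X1) t)))" by (metis f55 f7226)
  have f7259: "(\<forall>X3. ((i (n X3) t) = (p (i (n t) X3))))" by (metis f2520 f7227)
  have f7363: "(\<forall>X4. ((i (n X4) t) = (i (n t) (m X4))))" by (metis f2184 f7259)
  have f7364: "(\<forall>X6. ((i (i (n X6) t) t) = (p (p (n X6)))))" by (metis f2223 f7259)
  have f7367: "(\<forall>X6. ((p (n X6)) = (p (p (n X6)))))" by (metis f7364 d_p)
  have f7368: "(\<forall>X15. ((n (p (n X15))) = (m (m X15))))" by (metis f929 f7367)
  have f7388: "(\<forall>X15. ((m X15) = (m (m X15))))" by (metis f7368 f664)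
  have f7451: "(\<forall>X1. ((n (m (n X1))) = (p (p X1))))" by (metis f959 f7388)
  have f7531: "(\<forall>X1. ((p X1) = (p (p X1))))" by (metis f7451 f829)
  have f7603: "(\<forall>X2 X1. ((i X2 (i X1 e)) = (i (i (p (n X1)) (m X2)) (i (p X2) (m (n X1))))))" by (metis f7069 f131)
  have f7604: "(\<forall>X2 X1. ((i X2 (n X1)) = (i X2 (i X1 e))))" by (metis f7603 a7)
  have f7614: "(\<forall>X11 X12. ((i X12 (i e X11)) = (i (i (p X11) (m X12)) (i (p X12) (m X11)))))" by (metis f7075 a6b)
  have f7615: "(\<forall>X11 X12. ((i X12 X11) = (i X12 (i e X11))))" by (metis f7614 a7)
  have f7654: "(\<forall>X4. ((i t X4) = (i (i (p X4) e) (i t (m X4)))))" by (metis f7105 f59)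
  have f7655: "(\<forall>X4. ((i t X4) = (i (i (p X4) e) (n t))))" by (metis f7654 f602)
  have f7656: "(\<forall>X4. ((i t X4) = (i (m (n X4)) (n t))))" by (metis f7655 f709)
  have f7657: "(\<forall>X3. ((i t X3) = (m (i t X3))))" by (metis f2139 f7656)
  have f7658: "(\<forall>X1. ((i t X1) = (i t (p X1))))" by (metis f704 f7657)
  have f7692: "(\<forall>X6 X5. ((i (i X5 e) X6) = (i (i (p X6) (m (n X5))) (i (p (n X5)) (m X6)))))" by (metis f7106 f130)
  have f7693: "(\<forall>X6 X5. ((i (n X5) X6) = (i (i X5 e) X6)))" by (metis f7692 a7)
  have f7707: "(\<forall>X16 X15. ((i (i e X15) X16) = (i (i (p X16) (m X15)) (i (p X15) (m X16)))))" by (metis f7113 a5b)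
  have f7708: "(\<forall>X16 X15. ((i (i e X15) X16) = (i X15 X16)))" by (metis f7707 a7)
  have f7726: "(\<forall>X62. ((i e X62) = (i (i (p X62) e) (i e (m X62)))))" by (metis f7139 f61)
  have f7727: "(\<forall>X62. ((i e X62) = (i (i (p X62) e) (m X62))))" by (metis f7726 a6a)
  have f7728: "(\<forall>X62. ((i e X62) = (i (m (n X62)) (m X62))))" by (metis f7727 f709)
  have f8212: "(\<forall>X1. ((j (i (j t t) X1) (n (j t t))) = (i (j t t) (j X1 (i sK1 sK0)))))" by (metis a13 f7000)
  have f8219: "(\<forall>X1. ((i (j t t) (j X1 e)) = (i (j t t) (j X1 (i sK1 sK0)))))" by (metis f8212 f7022)
  have f8396: "(\<forall>X29 X30. ((i X29 (n (i e X30))) = (n (i (n X29) X30))))" by (metis f635 f7615)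
  have f8427: "(\<forall>X29 X30. ((i X29 (n (i e X30))) = (i X30 (n X29))))" by (metis f8396 a8)
  have f8428: "(\<forall>X29 X30. ((i X30 (n X29)) = (i X29 (i X30 e))))" by (metis f8427 a8)
  have f10644: "(\<forall>X29. ((p (i X29 (i (n X29) (i sK1 sK0)))) = (i (p X29) (i (m (n X29)) e))))" by (metis f710 f242)
  have f10907: "(\<forall>X29. ((p (i X29 (i (n X29) (i sK1 sK0)))) = (i (p X29) (n (m (n X29))))))" by (metis f10644 f7604)
  have f10908: "(\<forall>X29. ((p (i X29 (i (n X29) (i sK1 sK0)))) = (i (p X29) (p (n (n X29))))))" by (metis f10907 f693)
  have f10909: "(\<forall>X29. ((p (i X29 (i (n X29) (i sK1 sK0)))) = (i (p X29) (p X29))))" by (metis f10908 a9)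
  have f10910: "(\<forall>X29. (e = (p (i X29 (i (n X29) (i sK1 sK0))))))" by (metis f10909 f1527)
  have f10911: "(\<forall>X29. (e = (p (i X29 (i (i sK0 sK1) X29)))))" by (metis f10910 f124)
  have f10986: "(\<forall>X2. (e = (p (i (i X2 e) (i X2 (n (i sK0 sK1)))))))" by (metis f10911 f8428)
  have f11022: "(\<forall>X2. (e = (p (i (n X2) (i X2 (n (i sK0 sK1)))))))" by (metis f10986 f7693)
  have f11023: "(\<forall>X2. (e = (p (i (i (n (i sK0 sK1)) X2) X2))))" by (metis f11022 f124)
  have f11024: "(\<forall>X2. (e = (p (i (i (i sK1 sK0) X2) X2))))" by (metis f11023 a8)
  have f11163: "(e = (p (i (j t e) (j t (i sK1 sK0)))))" by (metis f11024 f6977)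
  have f19428: "(\<forall>X0 X1. ((j X1 (p X0)) = (i (i (p X1) (m (i (p X0) (p X1)))) (i (m (i (m (p X0)) (m X1))) (m X1)))))" by (metis f862 f7531)
  have f19504: "(\<forall>X145. ((j X145 (n t)) = (i (i (p X145) (m (i e (p X145)))) (i (m (i (m (n t)) (m X145))) (m X145)))))" by (metis f862 f83)
  have f19505: "(\<forall>X146. ((j X146 e) = (i (i (p X146) (m (i e (p X146)))) (i (m (i (m e) (m X146))) (m X146)))))" by (metis f862 f61)
  have f19510: "(\<forall>X0 X1. ((j (p X0) X1) = (i (i (p X0) (m (i (p X1) (p X0)))) (i (m (i (m X1) (m (p X0)))) (m (p X0))))))" by (metis f862 f7531)
  have f19516: "(\<forall>X12. ((j t X12) = (i (i t (m (i (p X12) t))) (i (m (i (m X12) (m t))) (m t)))))" by (metis f862 f59)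
  have f19526: "(\<forall>X36 X35. ((j (i X35 e) X36) = (i (i (p (n X35)) (m (i (p X36) (p (n X35))))) (i (m (i (m X36) (m (i X35 e)))) (m (i X35 e))))))" by (metis f862 f130)
  have f19551: "(\<forall>X85. ((j (i (j t e) (j t (i sK1 sK0))) X85) = (i (i e (m (i (p X85) e))) (i (m (i (m X85) (m (i (j t e) (j t (i sK1 sK0)))))) (m (i (j t e) (j t (i sK1 sK0))))))))" by (metis f862 f11163)
  have f19586: "(\<forall>X145. ((j (n t) X145) = (i (i e (m (i (p X145) e))) (i (m (i (m X145) (m (n t)))) (m (n t))))))" by (metis f862 f83)
  have f19772: "(\<forall>X12 X13. ((j X12 X13) = (i e (j X12 X13))))" by (metis f1163 f862)
  have f19774: "(\<forall>X0 X1. ((j X1 (p X0)) = (i (i (p X1) (m (i (p X0) (p X1)))) (i (m (i e (m X1))) (m X1)))))" by (metis f19428 f716)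
  have f19775: "(\<forall>X0 X1. ((j X1 (p X0)) = (i (i (p X1) (m (i (p X0) (p X1)))) (i (m (m X1)) (m X1)))))" by (metis f19774 a6b)
  have f19776: "(\<forall>X0 X1. ((j X1 (p X0)) = (i (i (p X1) (m (i (p X0) (p X1)))) (i (m X1) (m X1)))))" by (metis f19775 f7388)
  have f19777: "(\<forall>X0 X1. ((j X1 (p X0)) = (i (i (p X1) (m (i (p X0) (p X1)))) e)))" by (metis f19776 f1527)
  have f20016: "(\<forall>X145. ((j X145 (n t)) = (i (i (p X145) (m (i e (p X145)))) (i (m (i (n t) (m X145))) (m X145)))))" by (metis f19504 f439)
  have f20017: "(\<forall>X145. ((j X145 (n t)) = (i (i (p X145) (m (i e (p X145)))) (i e (m X145)))))" by (metis f20016 f843)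
  have f20018: "(\<forall>X145. ((j X145 (n t)) = (i (i (p X145) (m (i e (p X145)))) (m X145))))" by (metis f20017 a6a)
  have f20019: "(\<forall>X145. ((j X145 (n t)) = (i (i (p X145) (m (p X145))) (m X145))))" by (metis f20018 a6b)
  have f20020: "(\<forall>X145. ((j X145 (n t)) = (i (i (p X145) e) (m X145))))" by (metis f20019 f716)
  have f20021: "(\<forall>X145. ((j X145 (n t)) = (i (m (n X145)) (m X145))))" by (metis f20020 f709)
  have f20022: "(\<forall>X145. ((j X145 (n t)) = (i e X145)))" by (metis f20021 f7728)
  have f20160: "(\<forall>X146. ((j X146 e) = (i (i (p X146) (m (i e (p X146)))) (i (m (i e (m X146))) (m X146)))))" by (metis f19505 f418)
  have f20161: "(\<forall>X146. ((j X146 e) = (i (i (p X146) (m (i e (p X146)))) (i (m (m X146)) (m X146)))))" by (metis f20160 a6b)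
  have f20162: "(\<forall>X146. ((j X146 e) = (i (i (p X146) (m (i e (p X146)))) (i (m X146) (m X146)))))" by (metis f20161 f7388)
  have f20163: "(\<forall>X146. ((j X146 e) = (i (i (p X146) (m (i e (p X146)))) e)))" by (metis f20162 f1527)
  have f20164: "(\<forall>X146. ((j X146 e) = (i (i (p X146) (m (p X146))) e)))" by (metis f20163 a6b)
  have f20165: "(\<forall>X146. ((j X146 e) = (i (i (p X146) e) e)))" by (metis f20164 f716)
  have f20166: "(\<forall>X146. ((j X146 e) = (i (m (n X146)) e)))" by (metis f20165 f709)
  have f20167: "(\<forall>X146. ((j X146 e) = (p X146)))" by (metis f20166 f986)
  have f20177: "(\<forall>X1. ((i (j t t) (j X1 (i sK1 sK0))) = (i (j t t) (p X1))))" by (metis f8219 f20167)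
  have f21311: "(\<forall>X0 X1. ((j (p X0) X1) = (i (i (p X0) (m (i (p X1) (p X0)))) (i (m (i (m X1) e)) e))))" by (metis f19510 f716)
  have f21312: "(\<forall>X0 X1. ((j (p X0) X1) = (i (i (p X0) (m (i (p X1) (p X0)))) (p (n (i (m X1) e))))))" by (metis f21311 f718)
  have f21313: "(\<forall>X0 X1. ((j (p X0) X1) = (i (i (p X0) (m (i (p X1) (p X0)))) (p (i e (m X1))))))" by (metis f21312 a8)
  have f21314: "(\<forall>X0 X1. ((j (p X0) X1) = (i (i (p X0) (m (i (p X1) (p X0)))) (p (m X1)))))" by (metis f21313 a5b)
  have f21315: "(\<forall>X0 X1. ((j (p X0) X1) = (i (i (p X0) (m (i (p X1) (p X0)))) e)))" by (metis f21314 f520)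
  have f21316: "(\<forall>X0 X1. ((j (p X0) X1) = (j X0 (p X1))))" by (metis f21315 f19777)
  have f21365: "(\<forall>X12. ((j t X12) = (i (i t (m (i (p X12) t))) (i (m (i (m X12) e)) e))))" by (metis f19516 f417)
  have f21366: "(\<forall>X12. ((j t X12) = (i (i t (m (i (p X12) t))) (p (n (i (m X12) e))))))" by (metis f21365 f718)
  have f21367: "(\<forall>X12. ((j t X12) = (i (i t (m (i (p X12) t))) (p (i e (m X12))))))" by (metis f21366 a8)
  have f21368: "(\<forall>X12. ((j t X12) = (i (i t (m (i (p X12) t))) (p (m X12)))))" by (metis f21367 a5b)
  have f21369: "(\<forall>X12. ((j t X12) = (i (i t (m (i (p X12) t))) e)))" by (metis f21368 f520)
  have f21370: "(\<forall>X12. ((i (n t) e) = (j t X12)))" by (metis f21369 f602)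
  have f21371: "(\<forall>X12. ((i e t) = (j t X12)))" by (metis f21370 f125)
  have f21372: "(\<forall>X12. (t = (j t X12)))" by (metis f21371 f48)
  have f21383: "(\<forall>X61. ((i (n t) t) = (i (n t) (j (i sK0 sK1) X61))))" by (metis f4677 f21372)
  have f21384: "(\<forall>X62. ((i (n t) t) = (i (n t) (j (i sK1 sK2) X62))))" by (metis f4678 f21372)
  have f21471: "(\<forall>X1. ((i t (p X1)) = (i t (j X1 (i sK1 sK0)))))" by (metis f20177 f21372)
  have f21501: "(\<forall>X61. (t = (i (n t) (j (i sK0 sK1) X61))))" by (metis f21383 f84)
  have f21502: "(\<forall>X62. (t = (i (n t) (j (i sK1 sK2) X62))))" by (metis f21384 f84)
  have f21661: "(\<forall>X1. ((i t X1) = (i t (j X1 (i sK1 sK0)))))" by (metis f21471 f7658)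
  have f21662: "(\<forall>X53. ((i t X53) = (i t (j e X53))))" by (metis f4697 f21661)
  have f21663: "(\<forall>X123. ((i t X123) = (j (n t) (i t X123))))" by (metis f4563 f21662)
  have f21822: "(\<forall>X36 X35. ((j (i X35 e) X36) = (i (i (p (n X35)) (m (i (p X36) (p (n X35))))) (i (m (i (m X36) (m (n X35)))) (m (n X35))))))" by (metis f19526 f131)
  have f21823: "(\<forall>X36 X35. ((j (i X35 e) X36) = (j (n X35) X36)))" by (metis f21822 f862)
  have f21937: "(\<forall>X85. ((j (i (j t e) t) X85) = (i (i e (m (i (p X85) e))) (i (m (i (m X85) (m (i (j t e) t)))) (m (i (j t e) t))))))" by (metis f19551 f21372)
  have f21938: "(\<forall>X85. ((j (i (j t e) t) X85) = (i (i e (m (i (p X85) e))) (i (m (i (m X85) e)) e))))" by (metis f21937 f845)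
  have f21939: "(\<forall>X85. ((j (i (j t e) t) X85) = (i (i e (m (i (p X85) e))) (p (n (i (m X85) e))))))" by (metis f21938 f718)
  have f21940: "(\<forall>X85. ((j (i (j t e) t) X85) = (i (i e (m (i (p X85) e))) (p (i e (m X85))))))" by (metis f21939 a8)
  have f21941: "(\<forall>X85. ((j (i (j t e) t) X85) = (i (i e (m (i (p X85) e))) (p (m X85)))))" by (metis f21940 a5b)
  have f21942: "(\<forall>X85. ((j (i (j t e) t) X85) = (i (i e (m (i (p X85) e))) e)))" by (metis f21941 f520)
  have f21943: "(\<forall>X85. ((j (i (j t e) t) X85) = (i (m (i (p X85) e)) e)))" by (metis f21942 f7708)
  have f21944: "(\<forall>X85. ((j (i (j t e) t) X85) = (p (n (i (p X85) e)))))" by (metis f21943 f718)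
  have f21945: "(\<forall>X85. ((j (i (j t e) t) X85) = (p (i e (p X85)))))" by (metis f21944 a8)
  have f21946: "(\<forall>X85. ((j (i (j t e) t) X85) = (p (p X85))))" by (metis f21945 a5b)
  have f21947: "(\<forall>X85. ((p X85) = (j (i (j t e) t) X85)))" by (metis f21946 f7531)
  have f21948: "(\<forall>X85. ((p X85) = (j (i (p t) t) X85)))" by (metis f21947 f20167)
  have f21949: "(\<forall>X85. ((p X85) = (j (i t t) X85)))" by (metis f21948 f7227)
  have f21950: "(\<forall>X85. ((p X85) = (j e X85)))" by (metis f21949 d_e)
  have f22372: "(\<forall>X145. ((j (n t) X145) = (i (i e (m (i (p X145) e))) (i (p t) (p (n (i (m X145) (m (n t)))))))))" by (metis f19586 f4135)
  have f22373: "(\<forall>X145. ((j (n t) X145) = (i (i e (m (i (p X145) e))) (i (p t) (p (i (m (n t)) (m X145)))))))" by (metis f22372 a8)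
  have f22374: "(\<forall>X145. ((j (n t) X145) = (i (i e (m (i (p X145) e))) (i (p t) (p (i (n t) (m X145)))))))" by (metis f22373 f439)
  have f22375: "(\<forall>X145. ((j (n t) X145) = (i (i e (m (i (p X145) e))) (i (p t) (i (n (m X145)) t)))))" by (metis f22374 f7259)
  have f22376: "(\<forall>X145. ((j (n t) X145) = (i (i e (m (i (p X145) e))) (i (p t) (i (n t) (m X145))))))" by (metis f22375 f123)
  have f22377: "(\<forall>X145. ((j (n t) X145) = (i (i e (m (i (p X145) e))) (i (p t) (i (n X145) t)))))" by (metis f22376 f7363)
  have f22378: "(\<forall>X145. ((j (n t) X145) = (i (i e (m (i (p X145) e))) (i t (i (n X145) t)))))" by (metis f22377 f59)
  have f22379: "(\<forall>X145. ((j (n t) X145) = (i (i e (m (i (p X145) e))) (m (n (n X145))))))" by (metis f22378 f708)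
  have f22380: "(\<forall>X145. ((j (n t) X145) = (i (i e (m (i (p X145) e))) (m X145))))" by (metis f22379 a9)
  have f22381: "(\<forall>X145. ((j (n t) X145) = (i (m (i (p X145) e)) (m X145))))" by (metis f22380 a6a)
  have f22382: "(\<forall>X145. ((j (n t) X145) = (i (m (n (p X145))) (m X145))))" by (metis f22381 f131)
  have f22383: "(\<forall>X145. ((j (n t) X145) = (i (m (m (n X145))) (m X145))))" by (metis f22382 f686)
  have f22384: "(\<forall>X145. ((j (n t) X145) = (i (m (n X145)) (m X145))))" by (metis f22383 f7388)
  have f22385: "(\<forall>X145. ((j (n t) X145) = (i e X145)))" by (metis f22384 f7728)
  have f23197: "(\<forall>X3 X4. ((j X4 (j X3 e)) = (p (j X3 X4))))" by (metis f21950 f3523)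
  have f23222: "(\<forall>X3 X4. ((p (j X3 X4)) = (j X4 (p X3))))" by (metis f23197 f20167)
  have f23225: "(\<forall>X0 X1. ((j (p X0) X1) = (p (j X1 X0))))" by (metis f21316 f23222)
  have f23507: "(\<forall>X80 X79. ((j e X80) = (p (j X80 (m X79)))))" by (metis f23225 f520)
  have f23579: "(\<forall>X80 X79. ((p X80) = (p (j X80 (m X79)))))" by (metis f23507 f21950)
  have f23681: "(\<forall>X0 X1. ((p X0) = (p (j (m X1) X0))))" by (metis f23579 a11)
  have f23813: "(\<forall>X12 X13. ((n (p X13)) = (m (n (j (m X12) X13)))))" by (metis f686 f23681)
  have f23859: "(\<forall>X12 X13. ((m (n X13)) = (m (n (j (m X12) X13)))))" by (metis f23813 f686)
  have f25918: "((n t) = (j (n t) (n t)))" by (metis f21663 f479)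
  have f26010: "(\<forall>X0. ((j (n t) X0) = (j (n t) (j (n t) X0))))" by (metis a12 f25918)
  have f26019: "(\<forall>X0. ((i e X0) = (j (n t) (i e X0))))" by (metis f26010 f22385)
  have f26545: "(\<forall>X0. ((i t t) = (m (j (i sK0 sK1) X0))))" by (metis f501 f21501)
  have f26561: "(\<forall>X0. (e = (m (j (i sK0 sK1) X0))))" by (metis f26545 d_e)
  have f26572: "(\<forall>X0. (e = (m (i sK0 (j sK1 X0)))))" by (metis f26561 a13)
  have f30583: "(\<forall>X0. ((i t t) = (m (j (i sK1 sK2) X0))))" by (metis f501 f21502)
  have f30599: "(\<forall>X0. (e = (m (j (i sK1 sK2) X0))))" by (metis f30583 d_e)
  have f30610: "(\<forall>X0. (e = (m (i sK1 (j sK2 X0)))))" by (metis f30599 a13)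
  have f30611: "(\<forall>X1. (e = (m (j X1 (i sK1 sK2)))))" by (metis f30599 a11)
  have f30699: "(e = (m (i sK1 (p sK2))))" by (metis f30610 f20167)
  have f30779: "((n e) = (p (i (p sK2) sK1)))" by (metis f960 f30699)
  have f30812: "(e = (p (i (p sK2) sK1)))" by (metis f30779 f67)
  have f30870: "(\<forall>X8. ((j e X8) = (p (j X8 (i (p sK2) sK1)))))" by (metis f23225 f30812)
  have f30921: "(\<forall>X8. ((p X8) = (p (j X8 (i (p sK2) sK1)))))" by (metis f30870 f21950)
  have f33392: "(\<forall>X8 X9. ((j X9 (i e X8)) = (j (i e X8) (j X9 (n t)))))" by (metis f3362 f26019)
  have f33404: "(\<forall>X8 X9. ((j X9 (i e X8)) = (j (i e X8) (i e X9))))" by (metis f33392 f20022)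
  have f33405: "(\<forall>X8 X9. ((j X9 (i e X8)) = (i e (j X8 X9))))" by (metis f33404 a13)
  have f33406: "(\<forall>X8 X9. ((j X8 X9) = (j X9 (i e X8))))" by (metis f33405 f19772)
  have f33426: "(\<forall>X18 X19. ((j X19 (i X18 (n e))) = (j (i X18 e) X19)))" by (metis f33406 f8428)
  have f33500: "(\<forall>X18 X19. ((j X19 (i X18 (n e))) = (j (n X18) X19)))" by (metis f33426 f21823)
  have f33501: "(\<forall>X18 X19. ((j X19 (i X18 e)) = (j (n X18) X19)))" by (metis f33500 f67)
  have f38708: "(\<forall>X14 X15. ((i X14 (j X15 e)) = (j (n X14) (i X14 X15))))" by (metis f33501 a13)
  have f38821: "(\<forall>X14 X15. ((j (n X14) (i X14 X15)) = (i X14 (p X15))))" by (metis f38708 f20167)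
  have f71367: "(\<forall>X0. ((i X0 (p X0)) = (j (n X0) e)))" by (metis f38821 f1527)
  have f71516: "(\<forall>X143 X144. ((i (n X143) (p (n X144))) = (j (n (n X143)) (i X144 X143))))" by (metis f38821 a1)
  have f71585: "((p (n (p sK2))) = (p (i (p sK2) (p sK1))))" by (metis f30921 f38821)
  have f71668: "(\<forall>X0. ((p (n X0)) = (i X0 (p X0))))" by (metis f71367 f20167)
  have f72081: "(\<forall>X143 X144. ((i (n X143) (p (n X144))) = (j X143 (i X144 X143))))" by (metis f71516 a9)
  have f72082: "(\<forall>X143 X144. ((j X143 (i X144 X143)) = (i (m X144) X143)))" by (metis f72081 f699)
  have f72225: "((p (i (p sK2) (p sK1))) = (p (m (n sK2))))" by (metis f71585 f686)
  have f72226: "(e = (p (i (p sK2) (p sK1))))" by (metis f72225 f520)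
  have f72393: "(\<forall>X1. ((p (n (n X1))) = (i (m X1) (n (n X1)))))" by (metis f71668 f694)
  have f72848: "(\<forall>X1. ((p X1) = (i (m X1) X1)))" by (metis f72393 a9)
  have f75961: "((n e) = (m (i (p sK1) (p sK2))))" by (metis f685 f72226)
  have f76018: "(e = (m (i (p sK1) (p sK2))))" by (metis f75961 f67)
  have f77854: "((j sK2 sK1) = (i (i (p sK2) e) (i (m (i (m sK1) (m sK2))) (m sK2))))" by (metis f862 f76018)
  have f77921: "((j sK2 sK1) = (i (m (n sK2)) (i (m (i (m sK1) (m sK2))) (m sK2))))" by (metis f77854 f709)
  have f77922: "((j sK1 sK2) = (i (m (n sK2)) (i (m (i (m sK1) (m sK2))) (m sK2))))" by (metis f77921 a11)
  have f83235: "(e = (m (i (m sK1) sK2)))" by (metis f30611 f72082)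
  have f83346: "(\<forall>X210 X211. ((m (n (i X211 (m X210)))) = (m (n (i (m X211) (m X210))))))" by (metis f23859 f72082)
  have f83974: "(\<forall>X210 X211. ((m (n (i X211 (m X210)))) = (m (i (m X210) (m X211)))))" by (metis f83346 a8)
  have f83975: "(\<forall>X210 X211. ((m (i (m X210) (m X211))) = (m (i (m X210) X211))))" by (metis f83974 a8)
  have f84072: "((j sK1 sK2) = (i (m (n sK2)) (i (m (i (m sK1) sK2)) (m sK2))))" by (metis f77922 f83975)
  have f84078: "((j sK1 sK2) = (i (m (n sK2)) (i e (m sK2))))" by (metis f84072 f83235)
  have f84079: "((j sK1 sK2) = (i (m (n sK2)) (m sK2)))" by (metis f84078 a6a)
  have f84080: "((j sK1 sK2) = (i e sK2))" by (metis f84079 f7728)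
  have f84701: "(e = (m (i sK0 (i e sK2))))" by (metis f26572 f84080)
  have f84758: "(e = (m (i sK0 sK2)))" by (metis f84701 f7615)
  have f84881: "((p (i sK0 sK2)) = (i e (i sK0 sK2)))" by (metis f72848 f84758)
  have f84965: "((i sK0 sK2) = (p (i sK0 sK2)))" by (metis f84881 f1163)
  show False by (metis f28 f84965)
qed


lemma (in tw) atp_g1: "(\<forall>X0. ((p X0) = (p (p X0))))"
proof (rule ccontr)
  assume neg: "\<not> (\<forall>X0. ((p X0) = (p (p X0))))"
  have f21: "(\<not> (\<forall>X0. ((p X0) = (p (p X0)))))" using neg by metis
  have f22: "(\<exists>X0. ((p X0) \<noteq> (p (p X0))))" using f21 by metis
  obtain sK0 where f24: "((p sK0) \<noteq> (p (p sK0)))" using f22 by metis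
  have f25: "((p sK0) \<noteq> (p (p sK0)))" using f24 by metis
  have f45: "(t = (i e t))" by (metis a3 d_e)
  have f48: "((i e t) = (p t))" by (metis d_p d_e)
  have f54: "(t = (p t))" by (metis f48 f45)
  have f61: "(\<forall>X0. ((n (p X0)) = (i (p X0) e)))" by (metis a8 a5a)
  have f64: "(\<forall>X2. ((i t (i X2 t)) = (n (p X2))))" by (metis a8 d_p)
  have f65: "((n t) = (i t e))" by (metis a8 f45)
  have f71: "(t = (i (n t) t))" by (metis a3 f65)
  have f76: "((n t) = (i t (n t)))" by (metis a8 f71)
  have f103: "(\<forall>X0 X1. ((i X1 (n X0)) = (i X0 (n X1))))" by (metis a1 a9)
  have f106: "(\<forall>X0 X1. ((i (n X0) X1) = (i (n X1) X0)))" by (metis a1 a9)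
  have f117: "((m t) = (i (n t) (n t)))" by (metis d_m f76)
  have f147: "((i t t) = (m t))" by (metis f117 a1)
  have f151: "(e = (m t))" by (metis f147 d_e)
  have f277: "(\<forall>X5. ((m X5) = (i t (n (i X5 (n t))))))" by (metis f103 d_m)
  have f294: "(\<forall>X6. (t = (i (i X6 (n t)) t)))" by (metis a3 f103)
  have f314: "(\<forall>X5. ((m X5) = (i t (i (n t) X5))))" by (metis f277 a8)
  have f370: "(\<forall>X2. (t = (i (m X2) t)))" by (metis f294 d_m)
  have f392: "(\<forall>X3. ((n t) = (i t (m X3))))" by (metis a8 f370)
  have f428: "(\<forall>X6. ((n (p (n X6))) = (i t (i (n t) X6))))" by (metis f64 f106)
  have f430: "(\<forall>X8. ((p (n X8)) = (i (i (n t) X8) t)))" by (metis d_p f106)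
  have f456: "(\<forall>X6. ((n (p (n X6))) = (m X6)))" by (metis f428 f314)
  have f478: "(\<forall>X3. ((n (p X3)) = (m (n X3))))" by (metis f456 a9)
  have f485: "(\<forall>X3. ((n (m X3)) = (p (n X3))))" by (metis a9 f456)
  have f5125: "(\<forall>X0. ((i X0 t) = (i (i t (m X0)) (i (p X0) (m t)))))" by (metis a7 f54)
  have f5203: "(\<forall>X0. ((i X0 t) = (i (i t (m X0)) (i (p X0) e))))" by (metis f5125 f151)
  have f5204: "(\<forall>X0. ((i X0 t) = (i (i t (m X0)) (n (p X0)))))" by (metis f5203 f61)
  have f5205: "(\<forall>X0. ((i X0 t) = (i (i t (m X0)) (m (n X0)))))" by (metis f5204 f478)
  have f5206: "(\<forall>X0. ((i X0 t) = (i (n t) (m (n X0)))))" by (metis f5205 f392)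
  have f6201: "(\<forall>X3. ((i (i X3 t) t) = (p (n (m (n X3))))))" by (metis f430 f5206)
  have f6230: "(\<forall>X3. ((i (i X3 t) t) = (p (p (n (n X3))))))" by (metis f6201 f485)
  have f6231: "(\<forall>X3. ((i (i X3 t) t) = (p (p X3))))" by (metis f6230 a9)
  have f6232: "(\<forall>X3. ((p X3) = (p (p X3))))" by (metis f6231 d_p)
  have f6271: "((p sK0) \<noteq> (p sK0))" by (metis f25 f6232)
  show False using f6271 by simp
qed


lemma (in tw) atp_g2: "(\<forall>X0. ((i X0 t) = (p (i X0 t))))"
proof (rule ccontr)
  assume neg: "\<not> (\<forall>X0. ((i X0 t) = (p (i X0 t))))"
  have f21: "(\<not> (\<forall>X0. ((i X0 t) = (p (i X0 t)))))" using neg by metis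
  have f22: "(\<exists>X0. ((i X0 t) \<noteq> (p (i X0 t))))" using f21 by metis
  obtain sK0 where f24: "((i sK0 t) \<noteq> (p (i sK0 t)))" using f22 by metis
  have f25: "((i sK0 t) \<noteq> (p (i sK0 t)))" using f24 by metis
  have f45: "(t = (i e t))" by (metis a3 d_e)
  have f48: "((i e t) = (p t))" by (metis d_p d_e)
  have f50: "(\<forall>X1. ((p (i X1 t)) = (i (p X1) t)))" by (metis d_p d_p)
  have f54: "(t = (p t))" by (metis f48 f45)
  have f61: "(\<forall>X0. ((n (p X0)) = (i (p X0) e)))" by (metis a8 a5a)
  have f64: "(\<forall>X2. ((i t (i X2 t)) = (n (p X2))))" by (metis a8 d_p)
  have f65: "((n t) = (i t e))" by (metis a8 f45)
  have f71: "(t = (i (n t) t))" by (metis a3 f65)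
  have f76: "((n t) = (i t (n t)))" by (metis a8 f71)
  have f103: "(\<forall>X0 X1. ((i X1 (n X0)) = (i X0 (n X1))))" by (metis a1 a9)
  have f106: "(\<forall>X0 X1. ((i (n X0) X1) = (i (n X1) X0)))" by (metis a1 a9)
  have f117: "((m t) = (i (n t) (n t)))" by (metis d_m f76)
  have f147: "((i t t) = (m t))" by (metis f117 a1)
  have f151: "(e = (m t))" by (metis f147 d_e)
  have f180: "((i sK0 t) \<noteq> (i (p sK0) t))" by (metis f25 f50)
  have f278: "(\<forall>X5. ((m X5) = (i t (n (i X5 (n t))))))" by (metis f103 d_m)
  have f299: "(\<forall>X8. (t = (i (i X8 (n t)) t)))" by (metis a3 f103)
  have f315: "(\<forall>X5. ((m X5) = (i t (i (n t) X5))))" by (metis f278 a8)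
  have f371: "(\<forall>X2. (t = (i (m X2) t)))" by (metis f299 d_m)
  have f393: "(\<forall>X3. ((n t) = (i t (m X3))))" by (metis a8 f371)
  have f425: "(\<forall>X0 X1. ((i X1 (n X0)) = (n (i (n X1) X0))))" by (metis a8 f106)
  have f427: "(\<forall>X3. ((n (p (n X3))) = (i t (i (n t) X3))))" by (metis f64 f106)
  have f457: "(\<forall>X3. ((m X3) = (n (p (n X3)))))" by (metis f427 f315)
  have f479: "(\<forall>X3. ((n (p X3)) = (m (n X3))))" by (metis f457 a9)
  have f486: "(\<forall>X3. ((n (m X3)) = (p (n X3))))" by (metis a9 f457)
  have f5034: "(\<forall>X0. ((i X0 t) = (i (i t (m X0)) (i (p X0) (m t)))))" by (metis a7 f54)
  have f5112: "(\<forall>X0. ((i X0 t) = (i (i t (m X0)) (i (p X0) e))))" by (metis f5034 f151)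
  have f5113: "(\<forall>X0. ((i X0 t) = (i (i t (m X0)) (n (p X0)))))" by (metis f5112 f61)
  have f5114: "(\<forall>X0. ((i X0 t) = (i (i t (m X0)) (m (n X0)))))" by (metis f5113 f479)
  have f5115: "(\<forall>X0. ((i X0 t) = (i (n t) (m (n X0)))))" by (metis f5114 f393)
  have f6119: "(\<forall>X6. ((i t (n (m (n X6)))) = (n (i X6 t))))" by (metis f425 f5115)
  have f6150: "(\<forall>X6. ((i t X6) = (i t (n (m (n X6))))))" by (metis f6119 a8)
  have f6151: "(\<forall>X6. ((i t X6) = (i t (p (n (n X6))))))" by (metis f6150 f486)
  have f6152: "(\<forall>X6. ((i t X6) = (i t (p X6))))" by (metis f6151 a9)
  have f6352: "(\<forall>X7. ((i (p X7) t) = (n (i t X7))))" by (metis a8 f6152)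
  have f6380: "(\<forall>X7. ((i X7 t) = (i (p X7) t)))" by (metis f6352 a8)
  have f6473: "((i sK0 t) \<noteq> (i sK0 t))" by (metis f180 f6380)
  show False using f6473 by simp
qed


lemma (in tw) atp_mp: "(\<forall>X0 X1. ((((i X0 X1) = (p (i X0 X1))) \<and> ((i e X0) = (p (i e X0)))) \<longrightarrow> ((i e X1) = (p (i e X1)))))"
proof (rule ccontr)
  assume neg: "\<not> (\<forall>X0 X1. ((((i X0 X1) = (p (i X0 X1))) \<and> ((i e X0) = (p (i e X0)))) \<longrightarrow> ((i e X1) = (p (i e X1)))))"
  have f21: "(\<not> (\<forall>X0 X1. ((((i X0 X1) = (p (i X0 X1))) \<and> ((i e X0) = (p (i e X0)))) \<longrightarrow> ((i e X1) = (p (i e X1))))))" using neg by metis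
  have f22: "(\<exists>X0 X1. (((i e X1) \<noteq> (p (i e X1))) \<and> (((i X0 X1) = (p (i X0 X1))) \<and> ((i e X0) = (p (i e X0))))))" using f21 by metis
  have f23: "(\<exists>X0 X1. (((i e X1) \<noteq> (p (i e X1))) \<and> ((i X0 X1) = (p (i X0 X1))) \<and> ((i e X0) = (p (i e X0)))))" using f22 by metis
  obtain sK0 sK1 where f25: "(((i e sK1) \<noteq> (p (i e sK1))) \<and> ((i sK0 sK1) = (p (i sK0 sK1))) \<and> ((i e sK0) = (p (i e sK0))))" using f23 by metis
  have f26: "((i e sK0) = (p (i e sK0)))" using f25 by metis
  have f27: "((i sK0 sK1) = (p (i sK0 sK1)))" using f25 by metis
  have f28: "((i e sK1) \<noteq> (p (i e sK1)))" using f25 by metis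
  have f48: "(t = (i e t))" by (metis a3 d_e)
  have f50: "((i e sK0) = (p sK0))" by (metis a5b f26)
  have f52: "((i e sK1) \<noteq> (p sK1))" by (metis f28 a5b)
  have f53: "((p sK0) = (p (p sK0)))" by (metis f26 f50)
  have f55: "((m sK0) = (m (p sK0)))" by (metis a6b f50)
  have f59: "((i sK0 sK1) = (i e (i sK0 sK1)))" by (metis a5a f27)
  have f62: "((i e t) = (p t))" by (metis d_p d_e)
  have f63: "(\<forall>X0. ((i t t) = (p (i t X0))))" by (metis d_p a3)
  have f64: "(\<forall>X1. ((p (i X1 t)) = (i (p X1) t)))" by (metis d_p d_p)
  have f65: "((i t t) = (p e))" by (metis d_p f48)
  have f68: "(t = (p t))" by (metis f62 f48)
  have f69: "(\<forall>X0. (e = (p (i t X0))))" by (metis f63 d_e)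
  have f70: "(e = (p e))" by (metis f65 d_e)
  have f75: "(\<forall>X0. ((n (p X0)) = (i (p X0) e)))" by (metis a8 a5a)
  have f76: "(e = (n e))" by (metis a8 d_e)
  have f78: "(\<forall>X2. ((i t (i X2 t)) = (n (p X2))))" by (metis a8 d_p)
  have f79: "((n t) = (i t e))" by (metis a8 f48)
  have f80: "((i (i sK0 sK1) e) = (n (i sK0 sK1)))" by (metis a8 f59)
  have f81: "(\<forall>X3. ((i (m X3) e) = (n (m X3))))" by (metis a8 a6a)
  have f83: "((i sK0 e) = (n (p sK0)))" by (metis a8 f50)
  have f85: "((i (i sK0 sK1) e) = (i sK1 sK0))" by (metis f80 a8)
  have f87: "((p sK0) = (n (i sK0 e)))" by (metis a9 f83)
  have f94: "(\<forall>X6 X5. ((i X6 (n X5)) = (i X5 (n X6))))" by (metis a1 a9)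
  have f95: "(\<forall>X7. ((i X7 e) = (i e (n X7))))" by (metis a1 f76)
  have f98: "(\<forall>X4. ((i (i sK0 e) X4) = (i (n X4) (p sK0))))" by (metis a1 f87)
  have f99: "(\<forall>X6 X5. ((i (n X5) X6) = (i (n X6) X5)))" by (metis a1 a9)
  have f100: "(\<forall>X7. ((i e X7) = (i (n X7) e)))" by (metis a1 f76)
  have f103: "(e = (p (n t)))" by (metis f69 f79)
  have f104: "(t = (i (n t) t))" by (metis a3 f79)
  have f109: "((n t) = (i t (n t)))" by (metis a8 f104)
  have f148: "(\<forall>X0. ((p (n X0)) = (p (i X0 e))))" by (metis a5b f95)
  have f149: "(\<forall>X1. ((m (n X1)) = (m (i X1 e))))" by (metis a6b f95)
  have f282: "(\<forall>X1. (e = (p (n (p X1)))))" by (metis f69 f78)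
  have f283: "(\<forall>X2. (t = (i (n (p X2)) t)))" by (metis a3 f78)
  have f303: "(e = (p (n (i sK0 sK1))))" by (metis f282 f27)
  have f313: "(e = (p (i sK1 sK0)))" by (metis f303 a8)
  have f326: "((m t) = (i (n t) (n t)))" by (metis d_m f109)
  have f330: "((m e) = (i (i t e) (n t)))" by (metis d_m f95)
  have f335: "((m e) = (i (n t) (n t)))" by (metis f330 f79)
  have f336: "((m t) = (m e))" by (metis f335 f326)
  have f354: "(t = (i (n (i e sK0)) t))" by (metis f283 f26)
  have f370: "(t = (i (i sK0 e) t))" by (metis f354 a8)
  have f383: "(t = (i (n t) (p sK0)))" by (metis f370 f98)
  have f404: "((n t) = (i (p sK0) (n t)))" by (metis a8 f383)
  have f418: "((m (p sK0)) = (i (n t) (n t)))" by (metis d_m f404)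
  have f420: "((i t t) = (m (p sK0)))" by (metis f418 a1)
  have f421: "((i t t) = (m sK0))" by (metis f420 f55)
  have f422: "(e = (m sK0))" by (metis f421 d_e)
  have f457: "((i t t) = (m t))" by (metis f326 a1)
  have f459: "((m (n t)) = (i (m t) (n t)))" by (metis d_m f326)
  have f461: "(e = (m t))" by (metis f457 d_e)
  have f463: "((m (n t)) = (i e (n t)))" by (metis f459 f461)
  have f464: "((i t e) = (m (n t)))" by (metis f463 f95)
  have f465: "((n t) = (m (n t)))" by (metis f464 f79)
  have f505: "(\<forall>X7. ((m X7) = (i t (n (i X7 (n t))))))" by (metis f94 d_m)
  have f532: "(\<forall>X6. (e = (p (i X6 (n t)))))" by (metis f69 f94)
  have f562: "(\<forall>X7. ((m X7) = (i t (i (n t) X7))))" by (metis f505 a8)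
  have f610: "(\<forall>X2. (e = (p (m X2))))" by (metis f532 d_m)
  have f687: "(\<forall>X2 X3. ((i X2 X3) = (i e (i X2 X3))))" by (metis a4 d_e)
  have f698: "(\<forall>X6. (t = (i (i X6 X6) t)))" by (metis a4 f383)
  have f699: "(\<forall>X7. (e = (i (i X7 X7) e)))" by (metis a4 d_e)
  have f767: "(\<forall>X2. ((i t t) = (p (i X2 X2))))" by (metis d_p f698)
  have f776: "(\<forall>X2. (e = (p (i X2 X2))))" by (metis f767 d_e)
  have f943: "(\<forall>X0. ((m e) = (m (n (i X0 X0)))))" by (metis f149 f699)
  have f946: "(\<forall>X4. ((n e) = (i e (i X4 X4))))" by (metis a8 f699)
  have f952: "(\<forall>X0. ((m e) = (m (i X0 X0))))" by (metis f943 a8)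
  have f953: "(\<forall>X0. ((m t) = (m (i X0 X0))))" by (metis f952 f336)
  have f954: "(\<forall>X0. (e = (m (i X0 X0))))" by (metis f953 f461)
  have f957: "(\<forall>X4. (e = (i e (i X4 X4))))" by (metis f946 f76)
  have f1048: "(\<forall>X5. (t = (i (n t) (p X5))))" by (metis f99 f283)
  have f1076: "(\<forall>X23. ((n (p (n X23))) = (i t (i (n t) X23))))" by (metis f78 f99)
  have f1077: "(\<forall>X24. ((i (p (n X24)) t) = (p (i (n t) X24))))" by (metis f64 f99)
  have f1118: "(\<forall>X23. ((n (p (n X23))) = (m X23)))" by (metis f1076 f562)
  have f1145: "(\<forall>X1. ((n (p (m X1))) = (m (p (n X1)))))" by (metis f1118 f1118)
  have f1146: "(\<forall>X2 X3. ((m (i X2 X3)) = (n (p (i X3 X2)))))" by (metis f1118 a8)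
  have f1148: "(\<forall>X4. ((n (p X4)) = (m (n X4))))" by (metis f1118 a9)
  have f1151: "(\<forall>X0. ((n e) = (m (p X0))))" by (metis f1118 f282)
  have f1156: "(\<forall>X3. ((n (m X3)) = (p (n X3))))" by (metis a9 f1118)
  have f1160: "(\<forall>X10 X11. ((i (p (n X10)) (n X11)) = (i X11 (m X10))))" by (metis f94 f1118)
  have f1173: "(\<forall>X1. ((n e) = (m (p (n X1)))))" by (metis f1145 f610)
  have f1174: "(\<forall>X1. (e = (m (p (n X1)))))" by (metis f1173 f76)
  have f1181: "(\<forall>X0. (e = (m (p X0))))" by (metis f1151 f76)
  have f1261: "(\<forall>X4. ((n t) = (i (p X4) (n t))))" by (metis a8 f1048)
  have f1294: "(\<forall>X4. ((n e) = (m (n (i t X4)))))" by (metis f1148 f69)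
  have f1319: "(\<forall>X12 X13. ((i (p X12) (n X13)) = (i X13 (m (n X12)))))" by (metis f94 f1148)
  have f1326: "(\<forall>X23. ((i e (p X23)) = (i (m (n X23)) e)))" by (metis f100 f1148)
  have f1338: "(\<forall>X4. ((n e) = (m (i X4 t))))" by (metis f1294 a8)
  have f1339: "(\<forall>X4. (e = (m (i X4 t))))" by (metis f1338 f76)
  have f1361: "(\<forall>X23. ((p X23) = (i (m (n X23)) e)))" by (metis f1326 a5a)
  have f1750: "(\<forall>X0. ((p (p X0)) = (i (m (m (n X0))) e)))" by (metis f1361 f1148)
  have f1922: "(\<forall>X0. (e = (i X0 X0)))" by (metis f687 f957)
  have f1925: "(\<forall>X8 X9. ((i (i X8 X9) e) = (n (i X8 X9))))" by (metis a8 f687)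
  have f1929: "(\<forall>X8 X9. ((i X9 X8) = (i (i X8 X9) e)))" by (metis f1925 a8)
  have f2481: "(\<forall>X2 X3. ((i X2 (j X2 X3)) = (j e (i X2 X3))))" by (metis a13 f1922)
  have f3239: "(\<forall>X14 X13. ((i X14 (i e X13)) = (i (i (p X13) (m X14)) (i (p X14) (m (i e X13))))))" by (metis a7 a5b)
  have f3258: "(\<forall>X10 X9. ((i (i X9 X9) X10) = (i (i (p X10) e) (i (p (i X9 X9)) (m X10)))))" by (metis a7 f954)
  have f3262: "(\<forall>X18 X17. ((i (i e X17) X18) = (i (i (p X18) (m X17)) (i (p (i e X17)) (m X18)))))" by (metis a7 a6b)
  have f3266: "(\<forall>X22. ((i (n t) X22) = (i (i (p X22) (n t)) (i (p (n t)) (m X22)))))" by (metis a7 f465)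
  have f3361: "(\<forall>X14 X13. ((i X14 (i e X13)) = (i (i (p X13) (m X14)) (i (p X14) (m X13)))))" by (metis f3239 a6b)
  have f3362: "(\<forall>X14 X13. ((i X14 (i e X13)) = (i X14 X13)))" by (metis f3361 a7)
  have f3408: "(\<forall>X10 X9. ((i (i X9 X9) X10) = (i (i (p X10) e) (i e (m X10)))))" by (metis f3258 f776)
  have f3409: "(\<forall>X10 X9. ((i (i X9 X9) X10) = (i (i (p X10) e) (m X10))))" by (metis f3408 a6a)
  have f3410: "(\<forall>X10 X9. ((i (i X9 X9) X10) = (i (n (p X10)) (m X10))))" by (metis f3409 f75)
  have f3411: "(\<forall>X10 X9. ((i (i X9 X9) X10) = (i (m (n X10)) (m X10))))" by (metis f3410 f1148)
  have f3412: "(\<forall>X10. ((i e X10) = (i (m (n X10)) (m X10))))" by (metis f3411 f1922)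
  have f3423: "(\<forall>X18 X17. ((i (i e X17) X18) = (i (i (p X18) (m X17)) (i (p X17) (m X18)))))" by (metis f3262 a5b)
  have f3424: "(\<forall>X18 X17. ((i (i e X17) X18) = (i X17 X18)))" by (metis f3423 a7)
  have f3435: "(\<forall>X22. ((i (n t) X22) = (i (i (p X22) (n t)) (i e (m X22)))))" by (metis f3266 f103)
  have f3436: "(\<forall>X22. ((i (n t) X22) = (i (i (p X22) (n t)) (m X22))))" by (metis f3435 a6a)
  have f3437: "(\<forall>X22. ((i (n t) X22) = (i (n t) (m X22))))" by (metis f3436 f1261)
  have f3891: "(\<forall>X0. ((i e (p X0)) = (i (m (m (n X0))) (m (p X0)))))" by (metis f3412 f1148)
  have f3898: "(\<forall>X5. ((i e (m X5)) = (i (m (p (n X5))) (m (m X5)))))" by (metis f3412 f1156)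
  have f3912: "(\<forall>X4. ((i e (i X4 t)) = (i (m (n (i X4 t))) e)))" by (metis f3412 f1339)
  have f3931: "(\<forall>X0. ((i e (p X0)) = (i (m (m (n X0))) e)))" by (metis f3891 f1181)
  have f3932: "(\<forall>X0. ((i e (p X0)) = (p (p X0))))" by (metis f3931 f1750)
  have f3933: "(\<forall>X0. ((p X0) = (p (p X0))))" by (metis f3932 a5a)
  have f3950: "(\<forall>X5. ((i e (m X5)) = (i e (m (m X5)))))" by (metis f3898 f1174)
  have f3951: "(\<forall>X5. ((m (m X5)) = (i e (m X5))))" by (metis f3950 a6a)
  have f3952: "(\<forall>X5. ((m X5) = (m (m X5))))" by (metis f3951 a6a)
  have f3978: "(\<forall>X4. ((p (i X4 t)) = (i e (i X4 t))))" by (metis f3912 f1361)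
  have f3979: "(\<forall>X4. ((i X4 t) = (p (i X4 t))))" by (metis f3978 f687)
  have f4119: "(\<forall>X1. ((i X1 t) = (i (p X1) t)))" by (metis f3979 f64)
  have f10287: "(\<forall>X4 X5. ((j (i X4 X4) X5) = (i (i (p (i e (p X5))) (m (n (i X4 X4)))) (i (m (i (m X5) (m (i X4 X4)))) (m (i X4 X4))))))" by (metis dj f776)
  have f10315: "(\<forall>X55. ((j (n t) X55) = (i (i (p (i e (p X55))) (m (n (n t)))) (i (m (i (m X55) (m (n t)))) (m (n t))))))" by (metis dj f103)
  have f10322: "(\<forall>X0. ((j X0 (p sK0)) = (i (i (p (i (p X0) (p sK0))) (m (n X0))) (i (m (i (m (p sK0)) (m X0))) (m X0)))))" by (metis dj f53)
  have f10325: "(\<forall>X4 X5. ((j X5 (i X4 X4)) = (i (i (p (i (p X5) e)) (m (n X5))) (i (m (i (m (i X4 X4)) (m X5))) (m X5)))))" by (metis dj f776)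
  have f10346: "(\<forall>X45. ((j X45 (i e sK0)) = (i (i (p (i (p X45) (i e sK0))) (m (n X45))) (i (m (i (m (i e sK0)) (m X45))) (m X45)))))" by (metis dj f26)
  have f10347: "(\<forall>X46 X47. ((j X47 (i e X46)) = (i (i (p (i (p X47) (p X46))) (m (n X47))) (i (m (i (m (i e X46)) (m X47))) (m X47)))))" by (metis dj a5b)
  have f10362: "(\<forall>X2. ((j X2 X2) = (i (i (p e) (m (n X2))) (i (m (i (m X2) (m X2))) (m X2)))))" by (metis dj f1922)
  have f10469: "(\<forall>X8 X9. ((j X8 X9) = (i e (j X8 X9))))" by (metis f687 dj)
  have f10506: "(\<forall>X4 X5. ((j (i X4 X4) X5) = (i (i (p (i e (p X5))) (m (n (i X4 X4)))) (i (m (i (m X5) e)) e))))" by (metis f10287 f954)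
  have f10507: "(\<forall>X4 X5. ((j (i X4 X4) X5) = (i (i (p (i e (p X5))) (m (n (i X4 X4)))) (n (m (i (m X5) e))))))" by (metis f10506 f81)
  have f10508: "(\<forall>X4 X5. ((j (i X4 X4) X5) = (i (i (p (i e (p X5))) (m (n (i X4 X4)))) (p (n (i (m X5) e))))))" by (metis f10507 f1156)
  have f10509: "(\<forall>X4 X5. ((j (i X4 X4) X5) = (i (i (p (i e (p X5))) (m (n (i X4 X4)))) (p (i e (m X5))))))" by (metis f10508 a8)
  have f10510: "(\<forall>X4 X5. ((j (i X4 X4) X5) = (i (i (p (i e (p X5))) (m (n (i X4 X4)))) (p (m X5)))))" by (metis f10509 a5b)
  have f10511: "(\<forall>X4 X5. ((j (i X4 X4) X5) = (i (i (p (i e (p X5))) (m (n (i X4 X4)))) e)))" by (metis f10510 f610)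
  have f10512: "(\<forall>X4 X5. ((j (i X4 X4) X5) = (i (i (p (i e (p X5))) (m (i X4 X4))) e)))" by (metis f10511 a8)
  have f10513: "(\<forall>X4 X5. ((j (i X4 X4) X5) = (i (i (p (i e (p X5))) e) e)))" by (metis f10512 f954)
  have f10514: "(\<forall>X4 X5. ((j (i X4 X4) X5) = (i (n (p (i e (p X5)))) e)))" by (metis f10513 f75)
  have f10515: "(\<forall>X4 X5. ((j (i X4 X4) X5) = (i (m (i (p X5) e)) e)))" by (metis f10514 f1146)
  have f10516: "(\<forall>X4 X5. ((j (i X4 X4) X5) = (i (m (n (p X5))) e)))" by (metis f10515 f149)
  have f10517: "(\<forall>X4 X5. ((p (p X5)) = (j (i X4 X4) X5)))" by (metis f10516 f1361)
  have f10518: "(\<forall>X5. ((p (p X5)) = (j e X5)))" by (metis f10517 f1922)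
  have f10519: "(\<forall>X5. ((p X5) = (j e X5)))" by (metis f10518 f3933)
  have f10761: "(\<forall>X55. ((j (n t) X55) = (i (i (p (i e (p X55))) (m (n (n t)))) (i (p t) (n (m (i (m X55) (m (n t)))))))))" by (metis f10315 f1319)
  have f10762: "(\<forall>X55. ((j (n t) X55) = (i (i (p (i e (p X55))) (m (n (n t)))) (i (p t) (p (n (i (m X55) (m (n t)))))))))" by (metis f10761 f1156)
  have f10763: "(\<forall>X55. ((j (n t) X55) = (i (i (p (i e (p X55))) (m (n (n t)))) (i (p t) (p (i (m (n t)) (m X55)))))))" by (metis f10762 a8)
  have f10764: "(\<forall>X55. ((j (n t) X55) = (i (i (p (i e (p X55))) (m (n (n t)))) (i (p t) (p (i (n t) (m X55)))))))" by (metis f10763 f465)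
  have f10765: "(\<forall>X55. ((j (n t) X55) = (i (i (p (i e (p X55))) (m (n (n t)))) (i (p t) (i (p (n (m X55))) t)))))" by (metis f10764 f1077)
  have f10766: "(\<forall>X55. ((j (n t) X55) = (i (i (p (i e (p X55))) (m (n (n t)))) (i (p t) (i (n (m X55)) t)))))" by (metis f10765 f4119)
  have f10767: "(\<forall>X55. ((j (n t) X55) = (i (i (p (i e (p X55))) (m (n (n t)))) (i (p t) (i (n t) (m X55))))))" by (metis f10766 f99)
  have f10768: "(\<forall>X55. ((j (n t) X55) = (i (i (p (i e (p X55))) (m (n (n t)))) (i (p t) (i (n t) X55)))))" by (metis f10767 f3437)
  have f10769: "(\<forall>X55. ((j (n t) X55) = (i (i (p (i e (p X55))) (m (n (n t)))) (i t (i (n t) X55)))))" by (metis f10768 f68)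
  have f10770: "(\<forall>X55. ((j (n t) X55) = (i (i (p (i e (p X55))) (m (n (n t)))) (m X55))))" by (metis f10769 f562)
  have f10771: "(\<forall>X55. ((j (n t) X55) = (i (i (p (n t)) (n (p (i e (p X55))))) (m X55))))" by (metis f10770 f1319)
  have f10772: "(\<forall>X55. ((j (n t) X55) = (i (i (p (i e (p X55))) (m t)) (m X55))))" by (metis f10771 f1160)
  have f10773: "(\<forall>X55. ((j (n t) X55) = (i (i (p (i e (p X55))) e) (m X55))))" by (metis f10772 f461)
  have f10774: "(\<forall>X55. ((j (n t) X55) = (i (n (p (i e (p X55)))) (m X55))))" by (metis f10773 f75)
  have f10775: "(\<forall>X55. ((j (n t) X55) = (i (m (i (p X55) e)) (m X55))))" by (metis f10774 f1146)
  have f10776: "(\<forall>X55. ((j (n t) X55) = (i (m (n (p X55))) (m X55))))" by (metis f10775 f149)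
  have f10777: "(\<forall>X55. ((j (n t) X55) = (i (m (m (n X55))) (m X55))))" by (metis f10776 f1148)
  have f10778: "(\<forall>X55. ((j (n t) X55) = (i (m (n X55)) (m X55))))" by (metis f10777 f3952)
  have f10779: "(\<forall>X55. ((j (n t) X55) = (i e X55)))" by (metis f10778 f3412)
  have f10860: "(\<forall>X0. ((j X0 (p sK0)) = (i (i (p (i (p X0) (p sK0))) (m (n X0))) (i (m (i (m sK0) (m X0))) (m X0)))))" by (metis f10322 f55)
  have f10861: "(\<forall>X0. ((j X0 (p sK0)) = (j X0 sK0)))" by (metis f10860 dj)
  have f10877: "(\<forall>X4 X5. ((j X5 (i X4 X4)) = (i (i (p (i (p X5) e)) (m (n X5))) (i (m (i e (m X5))) (m X5)))))" by (metis f10325 f954)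
  have f10878: "(\<forall>X4 X5. ((j X5 (i X4 X4)) = (i (i (p (i (p X5) e)) (m (n X5))) (i (m (m X5)) (m X5)))))" by (metis f10877 a6b)
  have f10879: "(\<forall>X4 X5. ((j X5 (i X4 X4)) = (i (i (p (i (p X5) e)) (m (n X5))) (i (m X5) (m X5)))))" by (metis f10878 f3952)
  have f10880: "(\<forall>X4 X5. ((j X5 (i X4 X4)) = (i (i (p (i (p X5) e)) (m (n X5))) e)))" by (metis f10879 f1922)
  have f10881: "(\<forall>X4 X5. ((j X5 (i X4 X4)) = (i (i (p X5) (n (p (i (p X5) e)))) e)))" by (metis f10880 f1319)
  have f10882: "(\<forall>X4 X5. ((j X5 (i X4 X4)) = (i (i (p X5) (m (i e (p X5)))) e)))" by (metis f10881 f1146)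
  have f10883: "(\<forall>X4 X5. ((j X5 (i X4 X4)) = (i (i (p X5) (m (p X5))) e)))" by (metis f10882 a6b)
  have f10884: "(\<forall>X4 X5. ((j X5 (i X4 X4)) = (i (i (p X5) e) e)))" by (metis f10883 f1181)
  have f10885: "(\<forall>X4 X5. ((i e (p X5)) = (j X5 (i X4 X4))))" by (metis f10884 f1929)
  have f10886: "(\<forall>X5. ((i e (p X5)) = (j X5 e)))" by (metis f10885 f1922)
  have f10887: "(\<forall>X5. ((p X5) = (j X5 e)))" by (metis f10886 a5a)
  have f11018: "(\<forall>X45. ((j X45 (i e sK0)) = (i (i (p (i (p X45) (i e sK0))) (m (n X45))) (i (m (i (m sK0) (m X45))) (m X45)))))" by (metis f10346 a6b)
  have f11019: "(\<forall>X45. ((j X45 (i e sK0)) = (i (i (p (i (p X45) (i e sK0))) (m (n X45))) (i (m (i e (m X45))) (m X45)))))" by (metis f11018 f422)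
  have f11020: "(\<forall>X45. ((j X45 (i e sK0)) = (i (i (p (i (p X45) (i e sK0))) (m (n X45))) (i (m (m X45)) (m X45)))))" by (metis f11019 a6b)
  have f11021: "(\<forall>X45. ((j X45 (i e sK0)) = (i (i (p (i (p X45) (i e sK0))) (m (n X45))) (i (m X45) (m X45)))))" by (metis f11020 f3952)
  have f11022: "(\<forall>X45. ((j X45 (i e sK0)) = (i (i (p (i (p X45) (i e sK0))) (m (n X45))) e)))" by (metis f11021 f1922)
  have f11023: "(\<forall>X45. ((j X45 (i e sK0)) = (i (i (p X45) (n (p (i (p X45) (i e sK0))))) e)))" by (metis f11022 f1319)
  have f11024: "(\<forall>X45. ((j X45 (i e sK0)) = (i (i (p X45) (m (i (i e sK0) (p X45)))) e)))" by (metis f11023 f1146)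
  have f11025: "(\<forall>X45. ((j X45 (i e sK0)) = (i (i (p X45) (m (i sK0 (p X45)))) e)))" by (metis f11024 f3424)
  have f11026: "(\<forall>X45. ((j X45 (p sK0)) = (i (i (p X45) (m (i sK0 (p X45)))) e)))" by (metis f11025 f50)
  have f11027: "(\<forall>X45. ((i (i (p X45) (m (i sK0 (p X45)))) e) = (j X45 sK0)))" by (metis f11026 f10861)
  have f11028: "(\<forall>X46 X47. ((j X47 (i e X46)) = (i (i (p (i (p X47) (p X46))) (m (n X47))) (i (m (i (m X46) (m X47))) (m X47)))))" by (metis f10347 a6b)
  have f11029: "(\<forall>X46 X47. ((j X47 (i e X46)) = (j X47 X46)))" by (metis f11028 dj)
  have f11139: "(\<forall>X2. ((j X2 X2) = (i (i (p e) (m (n X2))) (i e (m X2)))))" by (metis f10362 f954)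
  have f11140: "(\<forall>X2. ((j X2 X2) = (i (i (p e) (m (n X2))) (m X2))))" by (metis f11139 a6a)
  have f11141: "(\<forall>X2. ((j X2 X2) = (i (i e (m (n X2))) (m X2))))" by (metis f11140 f70)
  have f11142: "(\<forall>X2. ((i (m (n X2)) (m X2)) = (j X2 X2)))" by (metis f11141 a6a)
  have f11143: "(\<forall>X2. ((i e X2) = (j X2 X2)))" by (metis f11142 f3412)
  have f12034: "(\<forall>X3 X4. ((j X3 (j X4 e)) = (p (j X3 X4))))" by (metis f10887 a12)
  have f12043: "(\<forall>X3 X4. ((p (j X3 X4)) = (j X3 (p X4))))" by (metis f12034 f10887)
  have f12177: "(\<forall>X0 X1. ((j (i e X0) X1) = (j (n t) (j X0 X1))))" by (metis a12 f10779)
  have f12188: "(\<forall>X0 X1. ((j (i e X0) X1) = (i e (j X0 X1))))" by (metis f12177 f10779)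
  have f12189: "(\<forall>X0 X1. ((j X0 X1) = (j (i e X0) X1)))" by (metis f12188 f10469)
  have f12276: "(\<forall>X5. ((i e (i e X5)) = (j X5 (i e X5))))" by (metis f12189 f11143)
  have f12277: "(\<forall>X6 X7. ((j X6 X7) = (j X7 (i e X6))))" by (metis f12189 a11)
  have f12313: "(\<forall>X5. ((i e X5) = (j X5 (i e X5))))" by (metis f12276 f687)
  have f12446: "(\<forall>X12 X13. ((i e (j X12 X13)) = (j X13 (i e X12))))" by (metis f12277 a13)
  have f12488: "(\<forall>X12 X13. ((i e (j X12 X13)) = (j X13 X12)))" by (metis f12446 f11029)
  have f12542: "(\<forall>X2 X1. ((j (i e X1) X2) = (j X1 (j (i e X1) X2))))" by (metis a12 f12313)
  have f12585: "(\<forall>X2 X1. ((j X1 X2) = (j X1 (j X1 X2))))" by (metis f12542 f12189)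
  have f12747: "(\<forall>X8 X7. ((p (j X7 X8)) = (p (j X8 X7))))" by (metis a5b f12488)
  have f12782: "(\<forall>X8 X7. ((p (j X7 X8)) = (j X8 (p X7))))" by (metis f12747 f12043)
  have f12808: "(\<forall>X41 X42 X43. ((i X43 (j X41 X42)) = (i X43 (j X42 X41))))" by (metis f3362 f12488)
  have f13020: "(\<forall>X12. ((p X12) = (j X12 (p X12))))" by (metis f12585 f10887)
  have f13102: "(\<forall>X23. (e = (j (m X23) e)))" by (metis f13020 f610)
  have f13122: "(\<forall>X1. ((i e (p X1)) = (j (p X1) X1)))" by (metis f12488 f13020)
  have f13149: "(\<forall>X1. ((p X1) = (j (p X1) X1)))" by (metis f13122 a5a)
  have f13198: "(\<forall>X2. (e = (j e (m X2))))" by (metis f13102 a11)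
  have f13277: "(\<forall>X3 X4. ((j e X4) = (j e (j (m X3) X4))))" by (metis a12 f13198)
  have f13279: "(\<forall>X3 X4. ((p X4) = (j e (j (m X3) X4))))" by (metis f13277 f10519)
  have f13918: "(\<forall>X0. (e = (i X0 (i e X0))))" by (metis f3424 f1922)
  have f15163: "(\<forall>X38 X37. (e = (m (j X38 (p X37)))))" by (metis f1181 f12782)
  have f15302: "(\<forall>X51. (e = (m (j X51 (i sK0 sK1)))))" by (metis f15163 f27)
  have f16453: "(\<forall>X2. (e = (m (i sK0 (j X2 sK1)))))" by (metis f15302 a13)
  have f17004: "(e = (m (i sK0 (p sK1))))" by (metis f16453 f13149)
  have f23710: "(\<forall>X71. ((p X71) = (j e (j (n t) X71))))" by (metis f13279 f465)
  have f23797: "(\<forall>X71. ((p X71) = (j e (i e X71))))" by (metis f23710 f10779)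
  have f24075: "(\<forall>X6. ((p (n X6)) = (j e (i X6 e))))" by (metis f23797 f95)
  have f25357: "((j sK1 sK0) = (i (i (p sK1) e) e))" by (metis f11027 f17004)
  have f25530: "((j sK1 sK0) = (i (n (p sK1)) e))" by (metis f25357 f75)
  have f25531: "((j sK1 sK0) = (i (m (n sK1)) e))" by (metis f25530 f1148)
  have f25532: "((p sK1) = (j sK1 sK0))" by (metis f25531 f1361)
  have f25545: "((p sK1) = (j sK0 sK1))" by (metis f25532 a11)
  have f30874: "((p (n (i sK0 sK1))) = (j e (i sK1 sK0)))" by (metis f24075 f85)
  have f30933: "((p (n (i sK0 sK1))) = (i sK1 (j sK1 sK0)))" by (metis f30874 f2481)
  have f30934: "((p (n (i sK0 sK1))) = (i sK1 (j sK0 sK1)))" by (metis f30933 f12808)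
  have f30935: "((p (n (i sK0 sK1))) = (i sK1 (p sK1)))" by (metis f30934 f25545)
  have f30936: "((p (i sK1 sK0)) = (i sK1 (p sK1)))" by (metis f30935 a8)
  have f30937: "(e = (i sK1 (p sK1)))" by (metis f30936 f313)
  have f34302: "(\<forall>X4 X5. ((i X4 (j (i e X4) X5)) = (j e (i X4 X5))))" by (metis a13 f13918)
  have f34407: "(\<forall>X4 X5. ((i X4 (j (i e X4) X5)) = (p (i X4 X5))))" by (metis f34302 f10519)
  have f34408: "(\<forall>X4 X5. ((i X4 (j X4 X5)) = (p (i X4 X5))))" by (metis f34407 f12189)
  have f34508: "(\<forall>X19. ((p (i X19 e)) = (i X19 (p X19))))" by (metis f34408 f10887)
  have f34750: "(\<forall>X19. ((p (n X19)) = (i X19 (p X19))))" by (metis f34508 f148)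
  have f36728: "(e = (p (n sK1)))" by (metis f34750 f30937)
  have f37263: "((p (n (n sK1))) = (i (n sK1) e))" by (metis f34750 f36728)
  have f37340: "((p (n (n sK1))) = (i (n e) sK1))" by (metis f37263 f99)
  have f37341: "((i e sK1) = (p (n (n sK1))))" by (metis f37340 f76)
  have f37342: "((i e sK1) = (p sK1))" by (metis f37341 a9)
  show False by (metis f37342 f52)
qed


lemma (in tw) atp_flat: "(\<forall>X0. ((((n t) = (p (n t))) \<and> ((p X0) = X0)) \<longrightarrow> ((n X0) = (p (n X0)))))"
proof (rule ccontr)
  assume neg: "\<not> (\<forall>X0. ((((n t) = (p (n t))) \<and> ((p X0) = X0)) \<longrightarrow> ((n X0) = (p (n X0)))))"
  have f21: "(\<not> (\<forall>X0. ((((n t) = (p (n t))) \<and> ((p X0) = X0)) \<longrightarrow> ((n X0) = (p (n X0))))))" using neg by metis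
  have f22: "(\<exists>X0. (((n X0) \<noteq> (p (n X0))) \<and> (((n t) = (p (n t))) \<and> ((p X0) = X0))))" using f21 by metis
  have f23: "(\<exists>X0. (((n X0) \<noteq> (p (n X0))) \<and> ((n t) = (p (n t))) \<and> ((p X0) = X0)))" using f22 by metis
  obtain sK0 where f25: "(((n sK0) \<noteq> (p (n sK0))) \<and> ((n t) = (p (n t))) \<and> (sK0 = (p sK0)))" using f23 by metis
  have f26: "(sK0 = (p sK0))" using f25 by metis
  have f27: "((n t) = (p (n t)))" using f25 by metis
  have f28: "((n sK0) \<noteq> (p (n sK0)))" using f25 by metis
  have f48: "(t = (i e t))" by (metis a3 d_e)
  have f54: "(\<forall>X0. ((i t t) = (p (i t X0))))" by (metis d_p a3)
  have f60: "(\<forall>X0. (e = (p (i t X0))))" by (metis f54 d_e)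
  have f67: "(e = (n e))" by (metis a8 d_e)
  have f70: "((n t) = (i t e))" by (metis a8 f48)
  have f81: "(e = (p (n t)))" by (metis f60 f70)
  have f85: "((n t) = e)" by (metis f81 f27)
  have f92: "(t = (n e))" by (metis a9 f85)
  have f105: "(t = e)" by (metis f92 f67)
  have f114: "(\<forall>X2. ((p X2) = (p (i t X2))))" by (metis a5b f105)
  have f121: "(t = (n t))" by (metis f67 f105)
  have f126: "(\<forall>X2. (e = (p X2)))" by (metis f114 f60)
  have f127: "(\<forall>X2. (t = (p X2)))" by (metis f126 f105)
  have f148: "(t = sK0)" by (metis f127 f26)
  have f154: "(t \<noteq> (n sK0))" by (metis f28 f127)
  have f157: "(t \<noteq> (n t))" by (metis f154 f148)
  show False by (metis f157 f121)
qed


lemma (in tw) atp_r3: "(\<forall>X0. (((i e X0) = (p (i e X0))) \<longrightarrow> ((m X0) = (p (m X0)))))"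
proof (rule ccontr)
  assume neg: "\<not> (\<forall>X0. (((i e X0) = (p (i e X0))) \<longrightarrow> ((m X0) = (p (m X0)))))"
  have f21: "(\<not> (\<forall>X0. (((i e X0) = (p (i e X0))) \<longrightarrow> ((m X0) = (p (m X0))))))" using neg by metis
  have f22: "(\<exists>X0. (((m X0) \<noteq> (p (m X0))) \<and> ((i e X0) = (p (i e X0)))))" using f21 by metis
  obtain sK0 where f24: "(((m sK0) \<noteq> (p (m sK0))) \<and> ((i e sK0) = (p (i e sK0))))" using f22 by metis
  have f25: "((i e sK0) = (p (i e sK0)))" using f24 by metis
  have f26: "((m sK0) \<noteq> (p (m sK0)))" using f24 by metis
  have f46: "(t = (i e t))" by (metis a3 d_e)
  have f48: "((i e sK0) = (p sK0))" by (metis a5b f25)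
  have f52: "((m sK0) = (m (p sK0)))" by (metis a6b f48)
  have f61: "((i t t) = (p e))" by (metis d_p f46)
  have f66: "(e = (p e))" by (metis f61 d_e)
  have f74: "(\<forall>X2. ((i t (i X2 t)) = (n (p X2))))" by (metis a8 d_p)
  have f78: "((i sK0 e) = (n (p sK0)))" by (metis a8 f48)
  have f81: "((p sK0) = (n (i sK0 e)))" by (metis a9 f78)
  have f95: "(\<forall>X4. ((i X4 (i sK0 e)) = (i (p sK0) (n X4))))" by (metis a1 f81)
  have f271: "(\<forall>X2. (t = (i (n (p X2)) t)))" by (metis a3 f74)
  have f321: "(t = (i (n (i e sK0)) t))" by (metis f271 f25)
  have f335: "(t = (i (i sK0 e) t))" by (metis f321 a8)
  have f351: "((n t) = (i t (i sK0 e)))" by (metis a8 f335)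
  have f362: "((m (p sK0)) = (i (i t (i sK0 e)) (n t)))" by (metis d_m f95)
  have f369: "((m (p sK0)) = (i (n t) (n t)))" by (metis f362 f351)
  have f370: "((i t t) = (m (p sK0)))" by (metis f369 a1)
  have f371: "((i t t) = (m sK0))" by (metis f370 f52)
  have f372: "(e = (m sK0))" by (metis f371 d_e)
  have f377: "(e \<noteq> (p e))" by (metis f26 f372)
  show False by (metis f377 f66)
qed


lemma (in tw) atp_ee: "(\<forall>X0. (e = (i X0 X0)))"
proof (rule ccontr)
  assume neg: "\<not> (\<forall>X0. (e = (i X0 X0)))"
  have f21: "(\<not> (\<forall>X0. (e = (i X0 X0))))" using neg by metis
  have f22: "(\<exists>X0. (e \<noteq> (i X0 X0)))" using f21 by metis
  obtain sK0 where f24: "(e \<noteq> (i sK0 sK0))" using f22 by metis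
  have f25: "(e \<noteq> (i sK0 sK0))" using f24 by metis
  have f62: "(e = (n e))" by (metis a8 d_e)
  have f539: "(\<forall>X6 X7. ((i X6 X7) = (i e (i X6 X7))))" by (metis a4 d_e)
  have f549: "(\<forall>X8. (e = (i (i X8 X8) e)))" by (metis a4 d_e)
  have f594: "(\<forall>X4. ((n e) = (i e (i X4 X4))))" by (metis a8 f549)
  have f603: "(\<forall>X4. (e = (i e (i X4 X4))))" by (metis f594 f62)
  have f1147: "(\<forall>X0. (e = (i X0 X0)))" by (metis f539 f603)
  have f1188: "(e \<noteq> e)" by (metis f25 f1147)
  show False using f1188 by simp
qed


lemma (in tw) atp_reg1: "(\<forall>X0 X1. ((i X0 X1) = (i (i e X0) X1)))"
proof (rule ccontr)
  assume neg: "\<not> (\<forall>X0 X1. ((i X0 X1) = (i (i e X0) X1)))"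
  have f21: "(\<not> (\<forall>X0 X1. ((i X0 X1) = (i (i e X0) X1))))" using neg by metis
  have f22: "(\<exists>X0 X1. ((i X0 X1) \<noteq> (i (i e X0) X1)))" using f21 by metis
  obtain sK0 sK1 where f24: "((i sK0 sK1) \<noteq> (i (i e sK0) sK1))" using f22 by metis
  have f25: "((i sK0 sK1) \<noteq> (i (i e sK0) sK1))" using f24 by metis
  have f5147: "(\<forall>X19 X20. ((i (i e X19) X20) = (i (i (p X20) (m X19)) (i (p (i e X19)) (m X20)))))" by (metis a7 a6b)
  have f5269: "(\<forall>X19 X20. ((i (i e X19) X20) = (i (i (p X20) (m X19)) (i (p X19) (m X20)))))" by (metis f5147 a5b)
  have f5270: "(\<forall>X19 X20. ((i X19 X20) = (i (i e X19) X20)))" by (metis f5269 a7)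
  have f6076: "((i sK0 sK1) \<noteq> (i sK0 sK1))" by (metis f25 f5270)
  show False using f6076 by simp
qed


lemma (in tw) atp_reg2: "(\<forall>X0 X1. ((i X0 X1) = (i X0 (i e X1))))"
proof (rule ccontr)
  assume neg: "\<not> (\<forall>X0 X1. ((i X0 X1) = (i X0 (i e X1))))"
  have f21: "(\<not> (\<forall>X0 X1. ((i X0 X1) = (i X0 (i e X1)))))" using neg by metis
  have f22: "(\<exists>X0 X1. ((i X0 X1) \<noteq> (i X0 (i e X1))))" using f21 by metis
  obtain sK0 sK1 where f24: "((i sK0 sK1) \<noteq> (i sK0 (i e sK1)))" using f22 by metis
  have f25: "((i sK0 sK1) \<noteq> (i sK0 (i e sK1)))" using f24 by metis
  have f5129: "(\<forall>X8 X7. ((i X8 (i e X7)) = (i (i (p X7) (m X8)) (i (p X8) (m (i e X7))))))" by (metis a7 a5b)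
  have f5218: "(\<forall>X8 X7. ((i X8 (i e X7)) = (i (i (p X7) (m X8)) (i (p X8) (m X7)))))" by (metis f5129 a6b)
  have f5219: "(\<forall>X8 X7. ((i X8 X7) = (i X8 (i e X7))))" by (metis f5218 a7)
  have f5439: "((i sK0 sK1) \<noteq> (i sK0 sK1))" by (metis f25 f5219)
  show False using f5439 by simp
qed


lemma (in tw) atp_areg3: "((n t) = (i e (n t)))"
proof (rule ccontr)
  assume neg: "\<not> ((n t) = (i e (n t)))"
  have f21: "(\<not> ((n t) = (i e (n t))))" using neg by metis
  have f22: "((n t) \<noteq> (i e (n t)))" using f21 by metis
  have f23: "((n t) \<noteq> (i e (n t)))" using f22 by metis
  have f43: "(t = (i e t))" by (metis a3 d_e)
  have f60: "(e = (n e))" by (metis a8 d_e)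
  have f63: "((n t) = (i t e))" by (metis a8 f43)
  have f103: "(\<forall>X5. ((i X5 e) = (i e (n X5))))" by (metis a1 f60)
  have f111: "((n t) \<noteq> (i t e))" by (metis f23 f103)
  show False by (metis f111 f63)
qed


lemma (in tw) atp_areg4: "(t = (i e t))"
proof (rule ccontr)
  assume neg: "\<not> (t = (i e t))"
  have f21: "(\<not> (t = (i e t)))" using neg by metis
  have f22: "(t \<noteq> (i e t))" using f21 by metis
  have f23: "(t \<noteq> (i e t))" using f22 by metis
  have f43: "(t = (i e t))" by (metis a3 d_e)
  show False by (metis f43 f23)
qed


lemma (in tw) atp_pe: "(e = (p e))"
proof (rule ccontr)
  assume neg: "\<not> (e = (p e))"
  have f21: "(\<not> (e = (p e)))" using neg by metis
  have f22: "(e \<noteq> (p e))" using f21 by metis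
  have f23: "(e \<noteq> (p e))" using f22 by metis
  have f43: "(t = (i e t))" by (metis a3 d_e)
  have f49: "((i t t) = (p e))" by (metis d_p f43)
  have f54: "(e = (p e))" by (metis f49 d_e)
  show False by (metis f54 f23)
qed


lemma (in tw) atp_m1: "(\<forall>X2 X3 X4. (((p (i X3 X4)) = (i X3 X4)) \<longrightarrow> ((p (i (i X2 X3) (i X2 X4))) = (i (i X2 X3) (i X2 X4)))))"
proof (rule ccontr)
  assume neg: "\<not> (\<forall>X2 X3 X4. (((p (i X3 X4)) = (i X3 X4)) \<longrightarrow> ((p (i (i X2 X3) (i X2 X4))) = (i (i X2 X3) (i X2 X4)))))"
  have c_0_21: "(\<forall>X1. ((i (i t X1) t) = t))" using a3 by metis
  have c_0_22: "(e = (i t t))" using d_e by metis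
  have c_0_24: "(\<forall>X1 X2. ((j X1 X2) = (i (i (p (i (p X1) (p X2))) (m (n X1))) (i (m (i (m X2) (m X1))) (m X1)))))" using dj by metis
  have c_0_25: "(\<forall>X1. ((p X1) = (i (i X1 t) t)))" using d_p by metis
  have c_0_26: "(\<forall>X1. ((m X1) = (i (i X1 (n t)) (n t))))" using d_m by metis
  have c_0_27: "(\<forall>X1 X2. ((i X1 X2) = (i (n X2) (n X1))))" using a1 by metis
  have c_0_28: "(\<forall>X1 X2. ((n (i X1 X2)) = (i X2 X1)))" using a8 by metis
  have c_0_29: "((i e t) = t)" by (metis c_0_21 c_0_22)
  have c_0_31: "(\<forall>X1 X2 X3. ((i (i X1 X1) (i X2 X3)) = (i X2 X3)))" using a4 by metis
  have c_0_32: "(\<forall>X1 X2. ((j X1 X2) = (i (i (i (i (i (i (i X1 t) t) (i (i X2 t) t)) t) t) (i (i (n X1) (n t)) (n t))) (i (i (i (i (i (i X2 (n t)) (n t)) (i (i X1 (n t)) (n t))) (n t)) (n t)) (i (i X1 (n t)) (n t))))))" by (metis c_0_24 c_0_25 c_0_26)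
  have c_0_33: "(\<forall>X1 X2 X3. ((i (i X1 X2) (n X3)) = (i X3 (i X2 X1))))" by (metis c_0_27 c_0_28)
  have c_0_34: "((n t) = (i t e))" by (metis c_0_28 c_0_29)
  have c_0_35: "(\<forall>X1 X2. ((i X1 X2) = (i (i (p X2) (m X1)) (i (p X1) (m X2)))))" using a7 by metis
  have c_0_36: "(\<forall>X1. ((i (i X1 X1) e) = e))" by (metis c_0_31 c_0_22)
  have c_0_37: "((n e) = e)" by (metis c_0_28 c_0_22)
  have c_0_38: "(\<forall>X1 X2. ((i e (i X1 X2)) = (i X1 X2)))" by (metis c_0_31 c_0_22)
  have c_0_40: "(\<forall>X1 X2. ((i (i (i (i (i (i (i X1 t) t) (i (i X2 t) t)) t) t) (i (i t X1) (n t))) (i (i (i (i (i (i X2 (n t)) (n t)) (i (i X1 (n t)) (n t))) (n t)) (n t)) (i (i X1 (n t)) (n t)))) = (j X1 X2)))" by (metis c_0_32 c_0_27)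
  have c_0_41: "(\<forall>X1 X2. ((i (i X1 X2) (i t e)) = (i t (i X2 X1))))" by (metis c_0_33 c_0_34)
  have c_0_42: "(\<forall>X1 X2. ((i X1 X2) = (i (i (i (i X2 t) t) (i (i X1 (n t)) (n t))) (i (i (i X1 t) t) (i (i X2 (n t)) (n t))))))" by (metis c_0_35 c_0_25 c_0_26)
  have c_0_43: "(\<forall>X1. ((i e (i X1 X1)) = e))" by (metis c_0_28 c_0_36 c_0_37)
  have c_0_44: "(\<forall>X1 X2. ((i (i X1 X2) e) = (i X2 X1)))" by (metis c_0_28 c_0_38)
  have c_0_45: "(\<forall>X1 X2 X3. ((i X1 (j X2 X3)) = (j (i X1 X2) (i X1 X3))))" using a13 by metis
  have c_0_46: "(\<forall>X1 X2. ((i (i (i (i (i (i (i X1 t) t) (i (i X2 t) t)) t) t) (i t (i X1 t))) (i (i t (i (i (i t (i (i t e) X1)) (i t (i (i t e) X2))) t)) (i t (i (i t e) X1)))) = (j X1 X2)))" by (metis c_0_40 c_0_34 c_0_41)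
  have c_0_47: "(\<forall>X1 X2. ((i (i (i (i X1 t) t) (i t (i (i t e) X2))) (i (i (i X2 t) t) (i t (i (i t e) X1)))) = (i X2 X1)))" by (metis c_0_42 c_0_34 c_0_41)
  have c_0_48: "(\<forall>X1. ((i X1 X1) = e))" by (metis c_0_43 c_0_38)
  have c_0_49: "(\<forall>X1. ((i t (i t X1)) = (i t e)))" by (metis c_0_44 c_0_21)
  have c_0_51: "(\<forall>X1 X2 X3. ((i e (j X1 (i X2 X3))) = (j (i e X1) (i X2 X3))))" by (metis c_0_45 c_0_38)
  have c_0_52: "(\<forall>X1 X2. ((i e (j X1 X2)) = (j X1 X2)))" by (metis c_0_38 c_0_46)
  have c_0_53: "(\<forall>X1 X2 X3. ((i (n X1) (i X2 X3)) = (i (i X3 X2) X1)))" by (metis c_0_27 c_0_28)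
  have c_0_55: "(\<forall>X1. ((i t (i (i X1 t) t)) = (i t X1)))" by (metis c_0_47 c_0_48 c_0_21 c_0_44 c_0_29 c_0_49 c_0_41)
  have c_0_56: "(\<forall>X1 X2 X3. ((i (i X1 t) (i (i X2 t) X3)) = (i (i X2 t) (i (i X1 t) X3))))" using a2 by metis
  have c_0_57: "(\<forall>X1 X2 X3. ((j (i e X1) (i X2 X3)) = (j X1 (i X2 X3))))" by (metis c_0_51 c_0_52)
  have c_0_59: "(\<forall>X1 X2. ((i (i t e) (i X1 X2)) = (i (i X2 X1) t)))" by (metis c_0_53 c_0_34)
  have c_0_60: "(\<forall>X1 X2. ((j X1 X2) = (j X2 X1)))" using a11 by metis
  have c_0_61: "(\<forall>X1. ((j X1 e) = (i (i X1 t) t)))" by (metis c_0_46 c_0_44 c_0_29 c_0_48 c_0_21 c_0_38 c_0_55)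
  have c_0_62: "(\<forall>X1 X2 X3 X4. ((i (i X1 X2) (i X3 X4)) = (i (i X4 X3) (i X2 X1))))" by (metis c_0_53 c_0_28)
  have c_0_63: "(\<forall>X1 X2. ((i (i X1 t) (i e X2)) = (i (i X1 t) X2)))" by (metis c_0_56 c_0_48 c_0_38)
  have c_0_64: "(\<forall>X1 X2. ((j X1 (i e X2)) = (j X1 X2)))" by (metis c_0_45 c_0_57 c_0_52)
  have c_0_65: "(\<forall>X1 X2 X3. ((j X1 (j X2 X3)) = (j (j X1 X2) X3)))" using a12 by metis
  have c_0_66: "(\<forall>X1. ((i (i (i X1 t) t) t) = (i X1 t)))" by (metis c_0_47 c_0_21 c_0_48 c_0_29 c_0_49 c_0_44 c_0_59)
  have c_0_67: "(\<not> (\<forall>X2 X3 X4. (((p (i X3 X4)) = (i X3 X4)) \<longrightarrow> ((p (i (i X2 X3) (i X2 X4))) = (i (i X2 X3) (i X2 X4))))))" using neg by metis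
  have c_0_68: "(\<forall>X1 X2 X3. ((j (i X1 X2) (i (i X2 X1) X3)) = (i (i X2 X1) (i (i X3 t) t))))" by (metis c_0_45 c_0_44 c_0_60 c_0_61)
  have c_0_69: "(\<forall>X1 X2. ((i (i X1 e) (i t X2)) = (i (i X2 t) X1)))" by (metis c_0_62 c_0_63)
  have c_0_70: "(\<forall>X1 X2. ((j (i e X1) X2) = (j X1 X2)))" by (metis c_0_57 c_0_64)
  have c_0_71: "(\<forall>X1 X2. ((i (i X1 t) (i t X2)) = (i t (i (i X1 t) X2))))" by (metis c_0_56 c_0_29)
  have c_0_72: "(\<forall>X1 X2 X3. ((j X1 (j X2 X3)) = (j X2 (j X3 X1))))" by (metis c_0_65 c_0_60)
  have c_0_73: "(\<forall>X1. ((j e X1) = (i (i X1 t) t)))" by (metis c_0_46 c_0_44 c_0_29 c_0_48 c_0_38 c_0_66 c_0_21)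
  have c_0_74: "(\<forall>X1. ((i (n X1) e) = (i e X1)))" by (metis c_0_27 c_0_37)
  obtain esk1_0 esk2_0 esk3_0 where c_0_75: "(((p (i esk2_0 esk3_0)) = (i esk2_0 esk3_0)) \<and> ((p (i (i esk1_0 esk2_0) (i esk1_0 esk3_0))) \<noteq> (i (i esk1_0 esk2_0) (i esk1_0 esk3_0))))" using c_0_67 by metis
  have c_0_76: "(\<forall>X1 X2. ((j X1 (i (i X2 t) X1)) = (i e X1)))" by (metis c_0_68 c_0_69 c_0_70 c_0_21 c_0_48 c_0_44)
  have c_0_77: "(\<forall>X1 X2. ((i (i (i X1 t) X2) t) = (i (i t X2) (i X1 t))))" by (metis c_0_28 c_0_71)
  have c_0_78: "(\<forall>X1 X2. ((i (i (j X1 X2) t) t) = (j X1 (i (i X2 t) t))))" by (metis c_0_72 c_0_73 c_0_61)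
  have c_0_80: "(\<forall>X1 X2. ((j X1 (i (n X1) X2)) = (i (i t (i X2 t)) X1)))" by (metis c_0_45 c_0_74 c_0_64 c_0_60 c_0_61 c_0_53)
  have c_0_81: "(\<forall>X1 X2. ((i t (j (i t X1) X2)) = (i t (j e X2))))" by (metis c_0_45 c_0_49)
  have c_0_82: "((p (i esk2_0 esk3_0)) = (i esk2_0 esk3_0))" using c_0_75 by metis
  have c_0_83: "(\<forall>X1. ((j X1 (i t X1)) = (i e X1)))" by (metis c_0_76 c_0_29)
  have c_0_84: "(\<forall>X1. ((i (i t X1) (i (i X1 t) t)) = t))" by (metis c_0_77 c_0_48 c_0_29 c_0_62)
  have c_0_85: "(\<forall>X1. ((j t X1) = t))" by (metis c_0_46 c_0_21 c_0_48 c_0_29 c_0_55 c_0_38 c_0_44)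
  have c_0_86: "(\<forall>X1 X2. ((j (i (i X1 t) t) X2) = (j X1 (i (i X2 t) t))))" by (metis c_0_65 c_0_73 c_0_78)
  have c_0_87: "(\<forall>X1. ((n (n X1)) = X1))" using a9 by metis
  have c_0_88: "(\<forall>X1. ((j X1 X1) = (i e X1)))" by (metis c_0_80 c_0_74 c_0_64 c_0_29 c_0_48)
  have c_0_89: "(\<forall>X1 X2. ((i t (j (i t X1) X2)) = (i t X2)))" by (metis c_0_81 c_0_73 c_0_55)
  have c_0_90: "((i (i (i esk2_0 esk3_0) t) t) = (i esk2_0 esk3_0))" by (metis c_0_82 c_0_25)
  have c_0_91: "(\<forall>X1 X2. ((i X1 (j X2 X1)) = (j e (i X1 X2))))" by (metis c_0_45 c_0_48 c_0_60)
  have c_0_92: "(\<forall>X1 X2. ((j X1 (j (i t X1) X2)) = (j X1 X2)))" by (metis c_0_65 c_0_83 c_0_70)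
  have c_0_93: "(\<forall>X1 X2. ((i (i t X1) (j X1 (i (i X2 t) t))) = t))" by (metis c_0_45 c_0_84 c_0_85 c_0_86)
  have c_0_94: "(\<forall>X1 X2 X3. ((j X1 (j X2 X3)) = (j X3 (j X2 X1))))" by (metis c_0_72 c_0_60)
  have c_0_95: "(\<forall>X1 X2. ((i (n X1) X2) = (i (n X2) X1)))" by (metis c_0_27 c_0_87)
  have c_0_96: "(\<forall>X1 X2. ((i X1 (i e X2)) = (i X1 X2)))" by (metis c_0_45 c_0_88 c_0_38)
  have c_0_97: "(\<forall>X1 X2. ((i X1 (n X2)) = (i X2 (n X1))))" by (metis c_0_27 c_0_87)
  have c_0_98: "(\<forall>X1 X2. ((i (j (i t X1) X2) t) = (i X2 t)))" by (metis c_0_28 c_0_89)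
  have c_0_99: "((i t (i (i esk2_0 esk3_0) t)) = (i esk3_0 esk2_0))" by (metis c_0_28 c_0_90)
  have c_0_100: "(\<forall>X1 X2. ((i X1 (j X2 X1)) = (i (i (i X1 X2) t) t)))" by (metis c_0_91 c_0_73)
  have c_0_101: "(\<forall>X1. ((j X1 (i t e)) = (i e X1)))" by (metis c_0_92 c_0_83 c_0_38 c_0_49)
  have c_0_102: "(\<forall>X1 X2. ((i (i t X1) (j X1 (i X2 t))) = t))" by (metis c_0_93 c_0_77 c_0_48 c_0_38)
  have c_0_103: "(\<forall>X1 X2. ((j X1 (i (i X2 t) t)) = (j X2 (i (i X1 t) t))))" by (metis c_0_94 c_0_73 c_0_61 c_0_78)
  have c_0_104: "(\<forall>X1 X2. ((i (n X1) X2) = (i (i X2 e) X1)))" by (metis c_0_95 c_0_96 c_0_28)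
  have c_0_105: "(\<forall>X1 X2. ((i X1 (n X2)) = (i X1 (i X2 e))))" by (metis c_0_96 c_0_97 c_0_37)
  have c_0_106: "(\<forall>X1. ((i (j (i esk3_0 esk2_0) X1) t) = (i X1 t)))" by (metis c_0_98 c_0_99)
  have c_0_107: "(\<forall>X1 X2. ((i X1 (j X1 X2)) = (j e (i X1 X2))))" by (metis c_0_45 c_0_48)
  have c_0_108: "(\<forall>X1. ((i (i (i (i t e) X1) t) t) = (i (i X1 e) t)))" by (metis c_0_100 c_0_101 c_0_59)
  have c_0_109: "(\<forall>X1 X2 X3. ((i (i t X1) (j X1 (j (i X2 t) X3))) = t))" by (metis c_0_45 c_0_102 c_0_85 c_0_65)
  have c_0_110: "(\<forall>X1 X2. ((j (i X1 t) (i (i X2 t) t)) = (j X2 (i X1 t))))" by (metis c_0_103 c_0_77 c_0_48 c_0_38)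
  have c_0_111: "(\<forall>X1 X2. ((i (i X1 e) X2) = (i (i X2 e) X1)))" by (metis c_0_95 c_0_104)
  have c_0_112: "(\<forall>X1. ((i (i (i esk2_0 esk3_0) X1) t) = (i (i t X1) (i esk2_0 esk3_0))))" by (metis c_0_77 c_0_90)
  have c_0_113: "(\<forall>X1 X2 X3 X4. ((i (i X1 X2) (i X3 (i X4 e))) = (i (i (i X3 e) X4) (i X2 X1))))" by (metis c_0_62 c_0_104 c_0_105)
  have c_0_114: "(\<forall>X1 X2. ((i (i X1 t) (i X2 e)) = (i X2 (i t X1))))" by (metis c_0_63 c_0_97 c_0_37 c_0_33)
  have c_0_115: "(\<forall>X1. ((i (i esk3_0 (j esk2_0 X1)) t) = (i (i esk3_0 X1) t)))" by (metis c_0_106 c_0_45)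
  have c_0_116: "(\<forall>X1 X2. ((i X1 (j X1 X2)) = (i (i (i X1 X2) t) t)))" by (metis c_0_107 c_0_73)
  have c_0_117: "(\<forall>X1 X2. ((i (i t e) (j X1 (i X2 t))) = t))" by (metis c_0_108 c_0_109 c_0_48 c_0_29 c_0_73 c_0_78 c_0_110 c_0_111)
  have c_0_118: "(\<forall>X1. ((j (i esk2_0 esk3_0) (i (i X1 t) t)) = (j X1 (i esk2_0 esk3_0))))" by (metis c_0_103 c_0_112 c_0_48 c_0_38)
  have c_0_119: "(\<forall>X1 X2. ((j X1 (i (i X2 e) X1)) = (i (i t (i X2 t)) X1)))" by (metis c_0_80 c_0_104)
  have c_0_120: "(\<forall>X1 X2. ((i (i e X1) X2) = (i X1 X2)))" by (metis c_0_28 c_0_96)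
  have c_0_121: "(\<forall>X1. ((i (n X1) t) = (i (i t e) X1)))" by (metis c_0_53 c_0_29)
  have c_0_122: "(\<forall>X1 X2 X3. ((i (i X1 (i X2 t)) (i t X3)) = (i (i X2 t) (i (i X3 t) X1))))" by (metis c_0_56 c_0_62)
  have c_0_123: "(\<forall>X1 X2 X3. ((i (i (i t X1) X2) (i t X3)) = (i (i X1 t) (i X2 (i t X3)))))" by (metis c_0_56 c_0_113 c_0_44 c_0_114)
  have c_0_124: "(\<forall>X1 X2 X3. ((i (i X1 e) (i X2 X3)) = (i (i X3 X2) X1)))" by (metis c_0_62 c_0_96)
  have c_0_125: "(\<forall>X1 X2. ((i X1 (i X2 e)) = (i X2 (i X1 e))))" by (metis c_0_28 c_0_104 c_0_105)
  have c_0_126: "(\<forall>X1. ((i (i esk3_0 (i e X1)) t) = (i (i esk3_0 X1) t)))" by (metis c_0_115 c_0_64)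
  have c_0_127: "((i (i esk3_0 esk2_0) t) = t)" by (metis c_0_21 c_0_99)
  have c_0_128: "(\<forall>X1 X2. ((i (j X1 X2) X1) = (i t (i (i X1 X2) t))))" by (metis c_0_28 c_0_116)
  have c_0_129: "(\<forall>X1. ((i (i t e) (j X1 (i esk2_0 esk3_0))) = t))" by (metis c_0_117 c_0_118)
  have c_0_130: "(\<forall>X1 X2. ((j X1 (i t (j X1 X2))) = (j X1 (i t X2))))" by (metis c_0_92 c_0_45)
  have c_0_131: "(\<forall>X1 X2. ((i t (j X1 (i (i X1 t) X2))) = (i t X1)))" by (metis c_0_68 c_0_71 c_0_45 c_0_21 c_0_48 c_0_44)
  have c_0_132: "(\<forall>X1 X2. ((j X1 (i X2 X1)) = (i (i t (i (i t e) X2)) X1)))" by (metis c_0_119 c_0_104 c_0_48 c_0_120 c_0_121)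
  have c_0_133: "(\<forall>X1 X2. ((i t (j X1 (i t X2))) = (i t (j X1 e))))" by (metis c_0_45 c_0_49)
  have c_0_134: "(\<forall>X1 X2 X3. ((i (i (i X1 t) X2) (i X3 t)) = (i (i t X1) (i X2 (i X3 t)))))" by (metis c_0_28 c_0_122)
  have c_0_135: "(\<forall>X1 X2 X3. ((i (i (i X1 X2) (i t X3)) t) = (i (i t (i X2 X1)) (i X3 t))))" by (metis c_0_77 c_0_62)
  have c_0_136: "(\<forall>X1 X2 X3. ((i t (i (i (i X1 X2) t) X3)) = (i t (i (i X2 X1) (i t X3)))))" by (metis c_0_123 c_0_124 c_0_71 c_0_29)
  have c_0_137: "(\<forall>X1 X2. ((i t (i (i (i t e) X1) X2)) = (i t (i X1 (i t X2)))))" by (metis c_0_71 c_0_104 c_0_123 c_0_29)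
  have c_0_138: "(\<forall>X1 X2. ((i (i t (i X1 e)) (i X2 t)) = (i (i X1 (i t X2)) t)))" by (metis c_0_77 c_0_125 c_0_44)
  have c_0_139: "(\<forall>X1. ((i (i esk3_0 (i (i X1 t) esk2_0)) t) = t))" by (metis c_0_115 c_0_76 c_0_126 c_0_127)
  have c_0_140: "(\<forall>X1. ((i (i (i X1 t) t) X1) = (i t (i (i X1 e) t))))" by (metis c_0_128 c_0_61)
  have c_0_141: "(\<forall>X1. ((i (i (j X1 esk3_0) esk2_0) t) = t))" by (metis c_0_129 c_0_45 c_0_124)
  have c_0_142: "(\<forall>X1 X2. ((j X1 (i t (i (i X1 t) X2))) = (i e X1)))" by (metis c_0_130 c_0_131 c_0_132 c_0_21 c_0_48)
  have c_0_143: "(\<forall>X1 X2 X3. ((i (i X1 X2) (i X3 e)) = (i X3 (i X2 X1))))" by (metis c_0_62 c_0_120)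
  have c_0_144: "(\<forall>X1 X2. ((i t (j X1 (i t X2))) = (i t X1)))" by (metis c_0_133 c_0_61 c_0_55)
  have c_0_145: "(\<forall>X1 X2. ((i (i t (i (i t X1) (i t (i (i t (i X1 t)) (i X2 t))))) (i (i (i (i t e) X1) t) (i (i (i X1 (i t (i (i t e) X2))) t) t))) = (j X1 X2)))" by (metis c_0_46 c_0_62 c_0_134 c_0_55 c_0_135 c_0_71 c_0_136 c_0_137 c_0_48 c_0_138)
  have c_0_146: "((i (i esk3_0 (i t (i (i t e) esk2_0))) t) = t)" by (metis c_0_139 c_0_140 c_0_111)
  have c_0_147: "((i (i t esk2_0) (i (i esk3_0 t) t)) = t)" by (metis c_0_141 c_0_73 c_0_77)
  have c_0_148: "(\<forall>X1 X2. ((j X1 (i t (i X2 (i t X1)))) = (i e X1)))" by (metis c_0_142 c_0_105 c_0_143)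
  have c_0_149: "(\<forall>X1 X2. ((j X1 (i t (j X2 X1))) = (j X1 (i t X2))))" by (metis c_0_83 c_0_144 c_0_65 c_0_45 c_0_51 c_0_57)
  have c_0_150: "((j esk2_0 esk3_0) = (i (i esk3_0 t) (i (i t e) esk3_0)))" by (metis c_0_145 c_0_146 c_0_62 c_0_147 c_0_48 c_0_44 c_0_122 c_0_108 c_0_111 c_0_60)
  have c_0_151: "(\<forall>X1. ((i (i esk3_0 (i t (i X1 (i t esk2_0)))) t) = t))" by (metis c_0_115 c_0_148 c_0_126 c_0_127)
  have c_0_152: "((j esk3_0 (i t esk2_0)) = (i e esk3_0))" by (metis c_0_149 c_0_150 c_0_142)
  have c_0_153: "(\<forall>X1. ((i t (n X1)) = (i X1 (i t e))))" by (metis c_0_33 c_0_29)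
  have c_0_154: "((i (i esk3_0 t) (i (i t e) esk3_0)) = (i e esk3_0))" by (metis c_0_145 c_0_151 c_0_21 c_0_48 c_0_44 c_0_122 c_0_108 c_0_111 c_0_152)
  have c_0_155: "(\<forall>X1 X2. ((i X1 (i (j (i X1 e) X2) e)) = (i t (i (i (i X1 e) X2) t))))" by (metis c_0_128 c_0_125)
  have c_0_156: "(\<forall>X1. ((i (i X1 (i t e)) t) = t))" by (metis c_0_21 c_0_153)
  have c_0_157: "(\<forall>X1 X2. ((i (i (i (i t e) X1) X2) t) = (i (i t X2) (i (i t e) X1))))" by (metis c_0_77 c_0_104)
  have c_0_158: "(\<forall>X1 X2 X3. ((i (i X1 X2) (i X1 (j X3 X2))) = (i (i (i (i X1 X2) (i X1 X3)) t) t)))" by (metis c_0_100 c_0_45)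
  have c_0_159: "((j esk2_0 esk3_0) = (i e esk3_0))" by (metis c_0_150 c_0_154)
  have c_0_160: "(\<forall>X1. ((i (i X1 t) (i (i t e) X1)) = (i e X1)))" by (metis c_0_145 c_0_155 c_0_44 c_0_29 c_0_85 c_0_21 c_0_48 c_0_156 c_0_122 c_0_157 c_0_38 c_0_101)
  have c_0_161: "(\<forall>X1. ((i (i (i (i X1 esk3_0) (i X1 esk2_0)) t) t) = e))" by (metis c_0_158 c_0_159 c_0_96 c_0_48)
  have c_0_162: "(\<forall>X1. ((i (i (i X1 esk3_0) (i X1 esk2_0)) t) = t))" by (metis c_0_160 c_0_161 c_0_124 c_0_21 c_0_29 c_0_38)
  have c_0_163: "((p (i (i esk1_0 esk2_0) (i esk1_0 esk3_0))) \<noteq> (i (i esk1_0 esk2_0) (i esk1_0 esk3_0)))" using c_0_75 by metis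
  have c_0_164: "(\<forall>X1. ((i X1 (i (i X1 t) t)) = (i (i (i X1 e) t) t)))" by (metis c_0_116 c_0_61)
  have c_0_165: "(\<forall>X1. ((i (i (i esk2_0 X1) (i esk3_0 X1)) t) = t))" by (metis c_0_162 c_0_62)
  have c_0_166: "((i (i (i (i esk1_0 esk2_0) (i esk1_0 esk3_0)) t) t) \<noteq> (i (i esk1_0 esk2_0) (i esk1_0 esk3_0)))" by (metis c_0_163 c_0_25)
  have c_0_167: "(\<forall>X1. ((i (i (i (i esk3_0 X1) (i esk2_0 X1)) t) t) = (i (i esk3_0 X1) (i esk2_0 X1))))" by (metis c_0_164 c_0_165 c_0_48 c_0_44)
  have c_0_168: "((i (i (i (i esk3_0 esk1_0) (i esk2_0 esk1_0)) t) t) \<noteq> (i (i esk3_0 esk1_0) (i esk2_0 esk1_0)))" by (metis c_0_166 c_0_62)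
  show False by (metis c_0_167 c_0_168)
qed



context tw begin

lemma ee: "i x x = e" using atp_ee by metis
lemma pp: "p (p x) = p x" using atp_g1 by metis
lemma reg1: "i (i e x) y = i x y" using atp_reg1 by metis
lemma reg2: "i x (i e y) = i x y" using atp_reg2 by metis
lemma pe: "p e = e" using atp_pe by metis
lemma mp': "p (i e x) = i e x \<Longrightarrow> p (i x y) = i x y \<Longrightarrow> p (i e y) = i e y" using atp_mp by metis
lemma flat': "p x = x \<Longrightarrow> p (n t) = n t \<Longrightarrow> p (n x) = n x" using atp_flat by metis
lemma r3': "p (i e x) = i e x \<Longrightarrow> p (m x) = m x" using atp_r3 by metis
lemma areg3: "i e (n t) = n t" using atp_areg3 by metis
lemma areg4: "i e t = t" using atp_areg4 by metis
lemma eimp: "i e (i x y) = i x y" using a4 d_e by metis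

lemma r2: assumes "p (i x y) = i x y" "p (i z w) = i z w"
  shows "p (i (i y z) (i x w)) = i (i y z) (i x w)"
proof -
  have 1: "p (i (i y z) (i y w)) = i (i y z) (i y w)" using atp_m1 assms(2) by metis
  have "p (i (n y) (n x)) = i (n y) (n x)" using assms(1) a1 by metis
  then have "p (i (i (n w) (n y)) (i (n w) (n x))) = i (i (n w) (n y)) (i (n w) (n x))"
    using atp_m1 by metis
  then have 2: "p (i (i y w) (i x w)) = i (i y w) (i x w)" using a1 by metis
  show ?thesis using atp_tr 1 2 by metis
qed

definition T :: "'a qw_alg" where
  "T = \<lparr>carrier = UNIV, imp = i, neg = n, pl = p, mi = m, one = t\<rparr>"

lemma T_simps [simp]: "imp T = i" "neg T = n" "one T = t" "pl T = p" "mi T = m"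
  by (simp_all add: T_def)

lemma ev_fplus [simp]: "eval T v (fplus a) = p (eval T v a)"
  by (simp add: fplus_def d_p)
lemma ev_fminus [simp]: "eval T v (fminus a) = m (eval T v a)"
  by (simp add: fminus_def d_m)
lemma ev_fdisj [simp]: "eval T v (fdisj a b) = j (eval T v a) (eval T v b)"
  by (simp add: fdisj_def dj fplus_def fminus_def d_p d_m)

lemma eD: "u = e \<Longrightarrow> p u = u" using pe by simp

lemma ax_sound: "axiom q \<Longrightarrow> p (eval T v q) = eval T v q"
proof (induction rule: axiom.induct)
  case (Q1a a b) show ?case by (rule eD) (simp, metis a1 ee)
next
  case (Q1b a b) show ?case by (rule eD) (simp, metis a1 ee)
next
  case (Q2a a) show ?case by (rule eD) (simp, metis a3 d_e)
next
  case (Q2b a) show ?case by (rule eD) (simp, metis a3 d_e)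
next
  case (Q3a a b) show ?case by (rule eD) (simp, metis ee reg2)
next
  case (Q3b a b) show ?case by (rule eD) (simp, metis ee reg1)
next
  case (Q4a a b) show ?case by (rule eD) (simp, metis a7 ee)
next
  case (Q4b a b) show ?case by (rule eD) (simp, metis a7 ee)
next
  case (Q5a a b) show ?case by (rule eD) (simp, metis a8 ee)
next
  case (Q5b a b) show ?case by (rule eD) (simp, metis a8 ee)
next
  case (Q6a a b) show ?case by (rule eD) (simp, metis a10 ee)
next
  case (Q6b a b) show ?case by (rule eD) (simp, metis a10 ee)
next
  case (Q7a a b c) show ?case by (rule eD) (simp, metis a13 a11 ee)
next
  case (Q7b a b c) show ?case by (rule eD) (simp, metis a13 a11 ee)
next
  case (Q8a a b c) show ?case by (rule eD) (simp, metis a12 ee)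
next
  case (Q8b a b c) show ?case by (rule eD) (simp, metis a12 ee)
next
  case (Q9 a b c) show ?case by (rule eD) (simp, metis a2 ee)
next
  case (Q10 a) show ?case using atp_g2 by simp
qed

lemma prov_sound: "provable q \<Longrightarrow> p (eval T v q) = eval T v q"
proof (induction rule: provable.induct)
  case (ax q) then show ?case by (rule ax_sound)
next
  case (qMP r q s)
  have 1: "p (i e (eval T v q)) = i e (eval T v q)" using qMP.IH(1) by (simp add: ee)
  have 2: "p (i (eval T v q) (eval T v s)) = i (eval T v q) (eval T v s)" using qMP.IH(2) by (simp add: ee eimp)
  show ?case using mp'[OF 1 2] by (simp add: ee)
next
  case (Reg q r) then show ?case by (simp add: ee) (metis a5a a5b)
next
  case (AReg1 r a b) then show ?case by (simp add: ee eimp)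
next
  case (AReg2 r a b) then show ?case by (simp add: ee eimp a8)
next
  case (AReg3 r) then show ?case by (simp add: ee areg3)
next
  case (AReg4 r) then show ?case by (simp add: ee areg4)
next
  case (Inv1 q) then show ?case by (simp add: a9)
next
  case (Inv2 q) then show ?case by (simp add: a9)
next
  case (Flat q) then show ?case using flat' by simp
next
  case (R2' a b c d) then show ?case using r2 by simp
next
  case (R3' r q)
  have "p (i e (eval T v q)) = i e (eval T v q)" using R3'.IH by (simp add: ee)
  then show ?case by (simp add: r3' d_m[symmetric] fminus_def)
qed

end



locale sqw_loc =
  fixes W :: "('a, 'b) qw_alg_scheme"
  assumes sqw: "sqw_star W"
begin

abbreviation C where "C \<equiv> carrier W"

lemma cl: "one W \<in> C" "x \<in> C \<Longrightarrow> y \<in> C \<Longrightarrow> imp W x y \<in> C"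
  "x \<in> C \<Longrightarrow> neg W x \<in> C" "x \<in> C \<Longrightarrow> pl W x \<in> C" "x \<in> C \<Longrightarrow> mi W x \<in> C"
  using sqw unfolding sqw_star_def qw_star_def by blast+

lemma eqs:
  assumes "x \<in> C" "y \<in> C" "z \<in> C"
  shows
  "imp W x y = imp W (neg W y) (neg W x)"
  "imp W (imp W x (one W)) (imp W (imp W y (one W)) z)
          = imp W (imp W y (one W)) (imp W (imp W x (one W)) z)"
  "imp W (imp W (one W) x) (one W) = one W"
  "imp W (imp W z z) (imp W x y) = imp W x y"
  "imp W (imp W (one W) (one W)) (pl W x) = pl W (imp W (imp W (one W) (one W)) x)"
  "pl W (imp W (imp W (one W) (one W)) x) = imp W (imp W x (one W)) (one W)"
  "imp W (imp W (one W) (one W)) (mi W x) = mi W (imp W (imp W (one W) (one W)) x)"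
  "mi W (imp W (imp W (one W) (one W)) x) = imp W (imp W x (neg W (one W))) (neg W (one W))"
  "imp W x y = imp W (imp W (pl W y) (mi W x)) (imp W (pl W x) (mi W y))"
  "neg W (imp W x y) = imp W y x"
  "neg W (neg W x) = x"
  "pl W (imp W x (imp W (neg W x) y)) = imp W (pl W x) (imp W (neg W (pl W x)) (pl W y))"
  "alg_join W x y = alg_join W y x"
  "alg_join W x (alg_join W y z) = alg_join W (alg_join W x y) z"
  "imp W x (alg_join W y z) = alg_join W (imp W x y) (imp W x z)"
  "pl W x = imp W (imp W (one W) (one W)) (pl W x)"
  "mi W x = imp W (imp W (one W) (one W)) (mi W x)"
  using sqw assms unfolding sqw_star_def qw_star_def by blast+

lemma pl_eq: "x \<in> C \<Longrightarrow> pl W x = imp W (imp W x (one W)) (one W)"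
  using eqs(5,6,16)[of x x x] by simp

lemma mi_eq: "x \<in> C \<Longrightarrow> mi W x = imp W (imp W x (neg W (one W))) (neg W (one W))"
  using eqs(7,8,17)[of x x x] by simp

definition r where "r x = (if x \<in> C then x else imp W (one W) (one W))"
lemma rC [simp]: "r x \<in> C" by (simp add: r_def cl)
lemma rid [simp]: "x \<in> C \<Longrightarrow> r x = x" by (simp add: r_def)

definition I where "I x y = imp W (r x) (r y)"
definition N where "N x = (if x \<in> C then neg W x else x)"
definition P where "P x = I (I x (one W)) (one W)"
definition M where "M x = I (I x (N (one W))) (N (one W))"
definition E where "E = I (one W) (one W)"
definition J where "J x y = I (I (P (I (P x) (P y))) (M (N x))) (I (M (I (M y) (M x))) (M x))"

lemma IC [simp]: "I x y \<in> C" by (simp add: I_def cl)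
lemma N_C [simp]: "x \<in> C \<Longrightarrow> N x = neg W x" by (simp add: N_def)
lemma negee: "neg W (imp W (one W) (one W)) = imp W (one W) (one W)"
  using eqs(10)[of "one W" "one W" "one W"] cl by simp
lemma rN [simp]: "r (N x) = neg W (r x)" by (simp add: N_def r_def cl negee)


lemma P_pl: "P x = pl W (r x)" by (simp add: P_def I_def pl_eq cl)
lemma M_mi: "M x = mi W (r x)" by (simp add: M_def I_def mi_eq cl)
lemma PC [simp]: "P x \<in> C" by (simp add: P_def)
lemma MC [simp]: "M x \<in> C" by (simp add: M_def)
lemma J_join: "J x y = alg_join W (r x) (r y)"
  unfolding J_def alg_join_def P_pl M_mi I_def rN by (simp add: cl)
lemma JC [simp]: "J x y \<in> C" by (simp add: J_def)
lemma joinC [simp]: "a \<in> C \<Longrightarrow> b \<in> C \<Longrightarrow> alg_join W a b \<in> C"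
  by (metis JC J_join rid)

lemma tw: "tw I N (one W) P M E J"
proof unfold_locales
  fix x y z
  show "P x = I (I x (one W)) (one W)" by (simp add: P_def)
  show "M x = I (I x (N (one W))) (N (one W))" by (simp add: M_def)
  show "E = I (one W) (one W)" by (simp add: E_def)
  show "I x y = I (N y) (N x)" by (simp add: I_def cl eqs(1)[of "r x" "r y" "r x"])
  show "I (I x (one W)) (I (I y (one W)) z) = I (I y (one W)) (I (I x (one W)) z)"
    by (simp add: I_def cl eqs(2)[of "r x" "r y" "r z"])
  show "I (I (one W) x) (one W) = one W" by (simp add: I_def cl eqs(3)[of "r x" "r x" "r x"])
  show "I (I z z) (I x y) = I x y" by (simp add: I_def cl eqs(4)[of "r x" "r y" "r z"])
  show "I E (P x) = P x"
    by (simp add: E_def P_def I_def cl eqs(4)[of "imp W (r x) (one W)" "one W" "one W"])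
  show "P (I E x) = P x"
    using eqs(5,6,16)[of "imp W (one W) (one W)" x x] eqs(6)[of "r x" x x]
      eqs(6)[of "imp W (imp W (one W) (one W)) (r x)" x x]
    by (simp add: E_def P_pl I_def cl) (metis eqs(5) eqs(16) pl_eq cl rC)
  show "I E (M x) = M x"
    by (simp add: E_def M_def I_def cl eqs(4)[of "imp W (r x) (neg W (one W))" "neg W (one W)" "one W"])
  show "M (I E x) = M x"
    by (simp add: E_def M_mi I_def cl) (metis eqs(7) eqs(8) eqs(17) mi_eq cl rC)
  show "I x y = I (I (P y) (M x)) (I (P x) (M y))"
    by (simp add: I_def P_pl M_mi cl eqs(9)[of "r x" "r y" "r x"])
  show "N (I x y) = I y x" by (simp add: I_def cl eqs(10)[of "r x" "r y" "r x"])
  show "N (N x) = x" by (simp add: N_def cl eqs(11)[of x x x])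
  show "P (I x (I (N x) y)) = I (P x) (I (N (P x)) (P y))"
    by (simp add: I_def P_pl cl eqs(12)[of "r x" "r y" "r x"])
  show "J x y = I (I (P (I (P x) (P y))) (M (N x))) (I (M (I (M y) (M x))) (M x))"
    by (simp add: J_def)
  show "J x y = J y x" by (simp add: J_join eqs(13)[of "r x" "r y" "r x"])
  show "J x (J y z) = J (J x y) z" by (simp add: J_join alg_join_def[symmetric] cl eqs(14)[of "r x" "r y" "r z"])
  show "I x (J y z) = J (I x y) (I x z)" by (simp add: J_join I_def cl eqs(15)[of "r x" "r y" "r z"])
qed

end



lemma prov_refl: "provable (Imp a a)"
proof -
  have "provable (Imp (Imp (Imp a a) (Imp a a)) (Imp a a))"
    using provable.ax[OF axiom.Q3b[of a "Imp a a"]] .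
  then show ?thesis by (rule provable.AReg1)
qed

lemma prov_boxed: "provable a \<Longrightarrow> provable (Imp a b) \<Longrightarrow> provable (Imp (Imp One One) b)"
  by (rule provable.qMP[OF provable.Reg provable.Reg])

lemma mp_imp: "provable a \<Longrightarrow> provable (Imp a (Imp b c)) \<Longrightarrow> provable (Imp b c)"
  by (rule provable.AReg1[OF prov_boxed])

lemma prov_trans: "provable (Imp a b) \<Longrightarrow> provable (Imp b c) \<Longrightarrow> provable (Imp a c)"
  by (rule mp_imp[OF _ provable.R2'[OF _ prov_refl]])

definition eqv :: "'v form \<Rightarrow> 'v form \<Rightarrow> bool" where
  "eqv a b \<longleftrightarrow> provable (Imp a b) \<and> provable (Imp b a)"

lemma eqv_refl: "eqv a a" by (simp add: eqv_def prov_refl)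
lemma eqv_sym: "eqv a b \<Longrightarrow> eqv b a" by (simp add: eqv_def)
lemma eqv_trans: "eqv a b \<Longrightarrow> eqv b c \<Longrightarrow> eqv a c"
  unfolding eqv_def using prov_trans by blast
lemmas [trans] = eqv_trans

lemma eqv_imp: "eqv a a' \<Longrightarrow> eqv b b' \<Longrightarrow> eqv (Imp a b) (Imp a' b')"
  unfolding eqv_def using provable.R2' by blast
lemma eqv_neg: "eqv a a' \<Longrightarrow> eqv (Neg a) (Neg a')"
  unfolding eqv_def using mp_imp provable.ax[OF axiom.Q1a] by blast
lemma eqv_ax: "axiom (Imp a b) \<Longrightarrow> axiom (Imp b a) \<Longrightarrow> eqv a b"
  unfolding eqv_def using provable.ax by blast

lemma eqv_fplus: "eqv a a' \<Longrightarrow> eqv (fplus a) (fplus a')"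
  unfolding fplus_def by (intro eqv_imp eqv_refl)
lemma eqv_fminus: "eqv a a' \<Longrightarrow> eqv (fminus a) (fminus a')"
  unfolding fminus_def by (intro eqv_imp eqv_refl)
lemma eqv_fdisj: "eqv a a' \<Longrightarrow> eqv b b' \<Longrightarrow> eqv (fdisj a b) (fdisj a' b')"
  unfolding fdisj_def by (intro eqv_imp eqv_refl eqv_fplus eqv_fminus eqv_neg)

lemma eqv_Q3: "eqv a (Imp (Imp b b) a)"
  by (rule eqv_ax[OF axiom.Q3a axiom.Q3b])

lemma eqv_negneg: "eqv (Neg (Neg a)) a"
proof -
  define e where "e = Imp One (One::'a form)"
  have 1: "eqv a (Imp e a)" unfolding e_def by (rule eqv_Q3)
  have 2: "eqv (Neg (Imp e a)) (Imp a e)" by (rule eqv_ax[OF axiom.Q5a axiom.Q5b])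
  have 3: "eqv (Neg (Imp a e)) (Imp e a)" by (rule eqv_ax[OF axiom.Q5a axiom.Q5b])
  have "eqv (Neg (Neg a)) (Neg (Neg (Imp e a)))" by (intro eqv_neg 1)
  also have "eqv \<dots> (Neg (Imp a e))" by (intro eqv_neg 2)
  also have "eqv \<dots> (Imp e a)" by (rule 3)
  also have "eqv \<dots> a" using 1 by (rule eqv_sym)
  finally show ?thesis .
qed

lemma eqv_ax': "axiom (Imp a b) \<Longrightarrow> axiom (Imp b a) \<Longrightarrow> eqv b a"
  by (rule eqv_sym[OF eqv_ax])

lemma eqv_disj_comm: "eqv (fdisj a b) (fdisj b a)"
proof -
  define e :: "'a form" where "e = Imp One One"
  have "eqv (fdisj a b) (Imp e (fdisj a b))" unfolding e_def by (rule eqv_Q3)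
  also have "eqv \<dots> (fdisj (Imp e b) (Imp e a))" by (rule eqv_ax[OF axiom.Q7a axiom.Q7b])
  also have "eqv \<dots> (fdisj b a)" unfolding e_def by (intro eqv_fdisj eqv_sym[OF eqv_Q3])
  finally show ?thesis .
qed

section \<open>Lindenbaum algebra\<close>

definition cls :: "'v form \<Rightarrow> 'v form set" where
  "cls a = {b. eqv a b}"

lemma cls_eq: "cls a = cls b \<longleftrightarrow> eqv a b"
proof
  assume "cls a = cls b"
  then have "b \<in> cls a" by (simp add: cls_def eqv_refl)
  then show "eqv a b" by (simp add: cls_def)
next
  assume "eqv a b"
  then show "cls a = cls b" unfolding cls_def
    by (auto intro: eqv_trans eqv_sym)
qed

definition rep :: "'v form set \<Rightarrow> 'v form" where
  "rep X = (SOME a. a \<in> X)"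

lemma cls_rep: "cls (rep (cls a)) = cls a"
proof -
  have "a \<in> cls a" by (simp add: cls_def eqv_refl)
  then have "rep (cls a) \<in> cls a" unfolding rep_def by (rule someI)
  then have "eqv a (rep (cls a))" by (simp add: cls_def)
  then show ?thesis by (simp add: cls_eq eqv_sym)
qed

lemma eqv_rep: "eqv (rep (cls a)) a"
  using cls_rep cls_eq by metis

definition LA :: "'v form set qw_alg" where
  "LA = \<lparr>carrier = range cls,
         imp = \<lambda>X Y. cls (Imp (rep X) (rep Y)),
         neg = \<lambda>X. cls (Neg (rep X)),
         pl = \<lambda>X. cls (fplus (rep X)),
         mi = \<lambda>X. cls (fminus (rep X)),
         one = cls One\<rparr>"

lemma LA_simps [simp]:
  "carrier LA = range cls"
  "imp LA (cls a) (cls b) = cls (Imp a b)"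
  "neg LA (cls a) = cls (Neg a)"
  "pl LA (cls a) = cls (fplus a)"
  "mi LA (cls a) = cls (fminus a)"
  "one LA = cls One"
  by (simp_all add: LA_def cls_eq eqv_imp eqv_neg eqv_fplus eqv_fminus eqv_rep)

lemma LA_join [simp]: "alg_join LA (cls a) (cls b) = cls (fdisj a b)"
  by (simp add: alg_join_def fdisj_def fplus_def fminus_def)

lemma ball_range_cls: "(\<forall>x\<in>range cls. P x) \<longleftrightarrow> (\<forall>a. P (cls a))"
  by auto

lemma eqv_Q3': "eqv (Imp (Imp z z) a) a"
  by (rule eqv_ax[OF axiom.Q3b axiom.Q3a])

lemma LA_sqw: "sqw_star LA"
  unfolding sqw_star_def qw_star_def ball_range_cls
  apply (simp add: cls_eq)
  apply (intro allI conjI)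
                      apply (simp_all add: fplus_def[symmetric] fminus_def[symmetric])
  subgoal by (rule eqv_ax[OF axiom.Q1a axiom.Q1b])
  subgoal by (rule eqv_ax[OF axiom.Q9 axiom.Q9])
  subgoal by (rule eqv_ax[OF axiom.Q2b axiom.Q2a])
  subgoal by (rule eqv_Q3')
  subgoal by (rule eqv_trans[OF eqv_Q3' eqv_fplus[OF eqv_Q3]])
  subgoal by (rule eqv_fplus[OF eqv_Q3'])
  subgoal by (rule eqv_trans[OF eqv_Q3' eqv_fminus[OF eqv_Q3]])
  subgoal by (rule eqv_fminus[OF eqv_Q3'])
  subgoal by (rule eqv_ax[OF axiom.Q4a axiom.Q4b])
  subgoal by (rule eqv_ax[OF axiom.Q5a axiom.Q5b])
  subgoal by (rule eqv_negneg)
  subgoal by (rule eqv_ax[OF axiom.Q6a axiom.Q6b])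
  subgoal by (rule eqv_disj_comm)
  subgoal by (rule eqv_ax[OF axiom.Q8a axiom.Q8b])
  subgoal by (rule eqv_trans[OF eqv_ax[OF axiom.Q7a axiom.Q7b] eqv_disj_comm])
  subgoal by (rule eqv_Q3)
  subgoal by (rule eqv_Q3)
  done


lemma LA_eval: "eval LA (\<lambda>x. cls (Var x)) q = cls q"
  by (induction q) simp_all

lemma LA_designated: "designated LA (cls q) \<longleftrightarrow> (\<exists>c. eqv q (fplus c))"
  unfolding designated_def by (auto simp: cls_eq fplus_def)

section \<open>Image algebra along an injection\<close>

definition img :: "('b \<Rightarrow> 'a) \<Rightarrow> ('b, 'c) qw_alg_scheme \<Rightarrow> 'a qw_alg" where
  "img g W = \<lparr>carrier = g ` carrier W,
     imp = \<lambda>x y. g (imp W (inv g x) (inv g y)),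
     neg = \<lambda>x. g (neg W (inv g x)),
     pl = \<lambda>x. g (pl W (inv g x)),
     mi = \<lambda>x. g (mi W (inv g x)),
     one = g (one W)\<rparr>"

lemma img_simps [simp]:
  assumes "inj g"
  shows "carrier (img g W) = g ` carrier W"
    "imp (img g W) (g x) (g y) = g (imp W x y)"
    "neg (img g W) (g x) = g (neg W x)"
    "pl (img g W) (g x) = g (pl W x)"
    "mi (img g W) (g x) = g (mi W x)"
    "one (img g W) = g (one W)"
  using assms by (simp_all add: img_def)

lemma img_join [simp]: "inj g \<Longrightarrow> alg_join (img g W) (g x) (g y) = g (alg_join W x y)"
  by (simp add: alg_join_def)

lemma ball_img: "(\<forall>x\<in>g ` A. P x) \<longleftrightarrow> (\<forall>x\<in>A. P (g x))" by auto

lemma img_sqw: assumes g: "inj g" and W: "sqw_star W" shows "sqw_star (img g W)"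
proof -
  have mem: "\<And>x A. g x \<in> g ` A \<longleftrightarrow> x \<in> A" using g by (simp add: inj_image_mem_iff)
  show ?thesis
    using W unfolding sqw_star_def qw_star_def
    by (simp only: img_simps[OF g] img_join[OF g] mem inj_eq[OF g] ball_img simp_thms) (elim conjE, intro conjI, assumption+)
qed

lemma img_eval: "inj g \<Longrightarrow> eval (img g W) (g \<circ> v) q = g (eval W v q)"
  by (induction q) simp_all

lemma img_designated: "inj g \<Longrightarrow> designated (img g W) (g d) \<longleftrightarrow> designated W d"
  unfolding designated_def by (auto simp: inj_eq)

section \<open>A two-element degenerate algebra\<close>

definition NA :: "bool qw_alg" where
  "NA = \<lparr>carrier = UNIV, imp = \<lambda>x y. False, neg = id, pl = \<lambda>x. False, mi = \<lambda>x. False, one = False\<rparr>"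

lemma NA_sqw: "sqw_star NA"
  by (simp add: sqw_star_def qw_star_def NA_def alg_join_def)

lemma NA_designated: "designated NA d \<longleftrightarrow> \<not> d"
  by (simp add: designated_def NA_def)

lemma NA_eval_simps [simp]:
  "eval NA v (Imp a b) = False" "eval NA v One = False" "eval NA v (Neg a) = eval NA v a"
  by (simp_all add: NA_def)

section \<open>Completeness\<close>

lemma prov_fplus: "provable (fplus c)"
  unfolding fplus_def by (rule provable.ax[OF axiom.Q10])

lemma prov_One: "provable (One :: 'v form)"
  by (rule provable.AReg4[OF provable.ax[OF axiom.Q10[of "Imp One One"]]])

lemma completeness_core:
  "eqv q (fplus c) \<Longrightarrow> \<not> eval NA (\<lambda>_. True) q \<Longrightarrow> provable q"
proof (induction "size q" arbitrary: q c rule: less_induct)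
  case less
  have pq: "provable (Imp (fplus c) q)" using less.prems(1) by (simp add: eqv_def)
  have bx: "provable (Imp (Imp One One) q)" by (rule prov_boxed[OF prov_fplus pq])
  show ?case
  proof (cases q)
    case (Var x) then show ?thesis using less.prems(2) by simp
  next
    case One then show ?thesis using prov_One by simp
  next
    case (Imp a b) then show ?thesis using bx provable.AReg1 by blast
  next
    case (Neg q1)
    note qN = this
    show ?thesis
    proof (cases q1)
      case (Var x) then show ?thesis using less.prems(2) qN by (simp add: NA_def)
    next
      case One then show ?thesis using bx qN provable.AReg3 by blast
    next
      case (Imp a b) then show ?thesis using bx qN provable.AReg2 by blast
    next
      case (Neg q2)
      have "eqv (Neg (Neg q2)) (fplus c)" using less.prems(1) qN \<open>q1 = Neg q2\<close> by simp
      then have "eqv q2 (fplus c)" by (rule eqv_trans[OF eqv_sym[OF eqv_negneg]])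
      moreover have "\<not> eval NA (\<lambda>_. True) q2" using less.prems(2) qN \<open>q1 = Neg q2\<close> by (simp add: NA_def)
      moreover have "size q2 < size q" using qN \<open>q1 = Neg q2\<close> by simp
      ultimately have "provable q2" using less.hyps by blast
      then show ?thesis using qN \<open>q1 = Neg q2\<close> provable.Inv1 by simp
    qed
  qed
qed

lemma completeness:
  fixes q :: "'v form"
  assumes f: "inj (f :: 'v form set \<Rightarrow> 'a)" and v: "valid_in TYPE('a) q"
  shows "provable q"
proof -
  have vd: "\<And>(W :: 'a qw_alg) v. sqw_star W \<Longrightarrow> range v \<subseteq> carrier W \<Longrightarrow> designated W (eval W v q)"
    using v unfolding valid_in_def by blast
  have "designated (img f LA) (eval (img f LA) (f \<circ> (\<lambda>x. cls (Var x))) q)"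
    by (rule vd[OF img_sqw[OF f LA_sqw]]) (auto simp: f)
  then have "designated LA (cls q)"
    by (simp add: img_eval[OF f] img_designated[OF f] LA_eval)
  then obtain c where c: "eqv q (fplus c)" by (auto simp: LA_designated)
  define h :: "bool \<Rightarrow> 'v form set" where "h b = (if b then UNIV else {})" for b
  have ih: "inj h" unfolding h_def inj_def by auto
  have fh: "inj (f \<circ> h)" using f ih by (rule inj_compose)
  have "designated (img (f \<circ> h) NA) (eval (img (f \<circ> h) NA) ((f \<circ> h) \<circ> (\<lambda>_. True)) q)"
    by (rule vd[OF img_sqw[OF fh NA_sqw]]) (auto simp: NA_def fh)
  then have "designated NA (eval NA (\<lambda>_. True) q)"
    by (simp only: img_eval[OF fh] img_designated[OF fh])
  then have "\<not> eval NA (\<lambda>_. True) q" by (simp add: NA_designated)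
  then show ?thesis using completeness_core[OF c] by blast
qed


context sqw_loc
begin

sublocale tw I N "one W" P M E J by (rule tw)

lemma eval_W: "range v \<subseteq> C \<Longrightarrow> eval W v q \<in> C \<and> eval T v q = eval W v q"
  by (induction q) (auto simp: I_def cl)

lemma sound: assumes "provable q" "range v \<subseteq> C" shows "designated W (eval W v q)"
proof -
  have 1: "eval W v q \<in> C" "eval T v q = eval W v q" using eval_W[OF assms(2)] by auto
  have "P (eval T v q) = eval T v q" using prov_sound[OF assms(1)] .
  then have "eval W v q = imp W (imp W (eval W v q) (one W)) (one W)"
    using 1 by (simp add: P_def I_def cl)
  then show ?thesis unfolding designated_def using 1 by blast
qed

end

theorem theorem4p1:
  fixes q :: "'v form"
  assumes "\<exists>f :: 'v form set \<Rightarrow> 'a. inj f"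
  shows "valid_in TYPE('a) q \<longleftrightarrow> provable q"
proof
  assume "valid_in TYPE('a) q"
  moreover obtain f :: "'v form set \<Rightarrow> 'a" where "inj f" using assms by blast
  ultimately show "provable q" using completeness by blast
next
  assume pq: "provable q"
  show "valid_in TYPE('a) q"
    unfolding valid_in_def
  proof (intro allI impI)
    fix W :: "'a qw_alg" and v :: "'v \<Rightarrow> 'a"
    assume "sqw_star W" "range v \<subseteq> carrier W"
    then show "designated W (eval W v q)"
      using sqw_loc.sound[of W q v] pq unfolding sqw_loc_def by blast
  qed
qed

end
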